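(* Let $n\ge2$ and $m\ge2n$. Let $F:\mathbb{B}^n\to D^{IV}_m$ be a holomorphic isometry which is a rational map with $F(0)=0$ and $\deg(F)=1$. Then there is a real orthogonal matrix $O\in O(m,\mathbb{R})$ such that $F(z)=\big(\tfrac{\sqrt2}{2}z_1,\tfrac{\sqrt{-2}}{2}z_1,\dots,\tfrac{\sqrt2}{2}z_n,\tfrac{\sqrt{-2}}{2}z_n,0,\dots,0\big)\,O$ for all $z\in\mathbb{B}^n$.
   Context: $\mathbb{B}^n=\{z\in\mathbb{C}^n:|z|^2<1\}$; $D^{IV}_m=\{Z\in\mathbb{C}^m: Z\overline{Z}^t<2,\ 1-Z\overline{Z}^t+\tfrac14|ZZ^t|^2>0\}$ (row vectors). Bergman metric $\omega_\Omega=\sqrt{-1}\partial\bar\partial\log K_\Omega$ with $K_{\mathbb{B}^n}=c(1-|z|^2)^{-(n+1)}$, $K_{D^{IV}_m}=c'(1-Z\overline{Z}^t+\tfrac14|ZZ^t|^2)^{-m}$; $F$ is a holomorphic isometry if $F^*\omega_{D^{IV}_m}=\lambda\omega_{\mathbb{B}^n}$ for a constant $\lambda>0$. For a rational map $F=(P_1,\dots,P_m)/R$ in lowest terms, $\deg(F)=\max\{\deg P_1,\dots,\deg P_m,\deg R\}$. *)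

theory Defs
  imports "HOL-Analysis.Analysis"
begin

text \<open>Points of C^N are represented as functions nat => complex; only the
coordinates 0..N-1 (i.e. z_1..z_N of the paper) are meaningful.\<close>

definition normsq :: "nat \<Rightarrow> (nat \<Rightarrow> complex) \<Rightarrow> real" where
  "normsq N z = (\<Sum>k<N. (cmod (z k))^2)"

definition unit_ball :: "nat \<Rightarrow> (nat \<Rightarrow> complex) set" where
  "unit_ball n = {z. (\<forall>k\<ge>n. z k = 0) \<and> normsq n z < 1}"

definition hIV :: "nat \<Rightarrow> (nat \<Rightarrow> complex) \<Rightarrow> real" where
  "hIV m Z = 1 - normsq m Z + (cmod (\<Sum>k<m. (Z k)^2))^2 / 4"

definition typeIV :: "nat \<Rightarrow> (nat \<Rightarrow> complex) set" where
  "typeIV m = {Z. normsq m Z < 2 \<and> hIV m Z > 0}"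

text \<open>Bergman kernels (normalising positive constants omitted: they do not
affect the Bergman metric).\<close>
definition K_ball :: "nat \<Rightarrow> (nat \<Rightarrow> complex) \<Rightarrow> real" where
  "K_ball n z = (1 - normsq n z) powr (- real (n + 1))"

definition K_IV :: "nat \<Rightarrow> (nat \<Rightarrow> complex) \<Rightarrow> real" where
  "K_IV m Z = (hIV m Z) powr (- real m)"

definition dx :: "nat \<Rightarrow> ((nat \<Rightarrow> complex) \<Rightarrow> complex) \<Rightarrow> (nat \<Rightarrow> complex) \<Rightarrow> complex" where
  "dx j f z = vector_derivative (\<lambda>t::real. f (z(j := z j + complex_of_real t))) (at 0)"

definition dy :: "nat \<Rightarrow> ((nat \<Rightarrow> complex) \<Rightarrow> complex) \<Rightarrow> (nat \<Rightarrow> complex) \<Rightarrow> complex" where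
  "dy j f z = vector_derivative (\<lambda>t::real. f (z(j := z j + \<i> * complex_of_real t))) (at 0)"

definition dz :: "nat \<Rightarrow> ((nat \<Rightarrow> complex) \<Rightarrow> complex) \<Rightarrow> (nat \<Rightarrow> complex) \<Rightarrow> complex" where
  "dz j f z = (dx j f z - \<i> * dy j f z) / 2"

definition dzbar :: "nat \<Rightarrow> ((nat \<Rightarrow> complex) \<Rightarrow> complex) \<Rightarrow> (nat \<Rightarrow> complex) \<Rightarrow> complex" where
  "dzbar j f z = (dx j f z + \<i> * dy j f z) / 2"

text \<open>Coefficients g_{jk} of the Bergman metric omega = sqrt(-1) d dbar log K
= sqrt(-1) sum g_{jk} dz_j /\ dzbar_k, i.e. g_{jk} = d^2 log K / dz_j dzbar_k.\<close>
definition bergman_coeff :: "((nat \<Rightarrow> complex) \<Rightarrow> real) \<Rightarrow> nat \<Rightarrow> nat \<Rightarrow> (nat \<Rightarrow> complex) \<Rightarrow> complex" where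
  "bergman_coeff K j k z = dz j (dzbar k (\<lambda>w. complex_of_real (ln (K w)))) z"

definition pullback_coeff ::
  "nat \<Rightarrow> (nat \<Rightarrow> nat \<Rightarrow> (nat \<Rightarrow> complex) \<Rightarrow> complex) \<Rightarrow> ((nat \<Rightarrow> complex) \<Rightarrow> (nat \<Rightarrow> complex))
     \<Rightarrow> nat \<Rightarrow> nat \<Rightarrow> (nat \<Rightarrow> complex) \<Rightarrow> complex" where
  "pullback_coeff m g F j k z =
     (\<Sum>a<m. \<Sum>b<m. g a b (F z) * dz j (\<lambda>w. F w a) z * cnj (dz k (\<lambda>w. F w b) z))"

definition cdiff_at :: "nat \<Rightarrow> ((nat \<Rightarrow> complex) \<Rightarrow> complex) \<Rightarrow> (nat \<Rightarrow> complex) \<Rightarrow> bool" where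
  "cdiff_at n f z \<longleftrightarrow> (\<exists>a::nat \<Rightarrow> complex. \<forall>e>0. \<exists>d>0. \<forall>w. (\<forall>k\<ge>n. w k = 0) \<and> sqrt (normsq n (\<lambda>k. w k - z k)) < d
        \<longrightarrow> cmod (f w - f z - (\<Sum>k<n. a k * (w k - z k))) \<le> e * sqrt (normsq n (\<lambda>k. w k - z k)))"

definition holomorphic_map :: "nat \<Rightarrow> nat \<Rightarrow> (nat \<Rightarrow> complex) set \<Rightarrow> ((nat \<Rightarrow> complex) \<Rightarrow> (nat \<Rightarrow> complex)) \<Rightarrow> bool" where
  "holomorphic_map n m U F \<longleftrightarrow> (\<forall>z\<in>U. \<forall>j<m. cdiff_at n (\<lambda>w. F w j) z)"

definition holo_isometry :: "nat \<Rightarrow> nat \<Rightarrow> ((nat \<Rightarrow> complex) \<Rightarrow> (nat \<Rightarrow> complex)) \<Rightarrow> bool" where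
  "holo_isometry n m F \<longleftrightarrow>
     (\<forall>z\<in>unit_ball n. F z \<in> typeIV m) \<and> holomorphic_map n m (unit_ball n) F \<and>
     (\<exists>c>0. \<forall>z\<in>unit_ball n. \<forall>j<n. \<forall>k<n.
        pullback_coeff m (bergman_coeff (K_IV m)) F j k z = complex_of_real c * bergman_coeff (K_ball n) j k z)"

text \<open>Polynomials in n complex variables, given by finitely supported coefficient
functions on exponent vectors alpha (with alpha k = 0 for k >= n).\<close>
definition is_mpoly :: "nat \<Rightarrow> ((nat \<Rightarrow> nat) \<Rightarrow> complex) \<Rightarrow> bool" where
  "is_mpoly n c \<longleftrightarrow> finite {\<alpha>. c \<alpha> \<noteq> 0} \<and> (\<forall>\<alpha>. c \<alpha> \<noteq> 0 \<longrightarrow> (\<forall>k\<ge>n. \<alpha> k = 0))"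

definition mpoly_eval :: "nat \<Rightarrow> ((nat \<Rightarrow> nat) \<Rightarrow> complex) \<Rightarrow> (nat \<Rightarrow> complex) \<Rightarrow> complex" where
  "mpoly_eval n c z = (\<Sum>\<alpha>\<in>{\<alpha>. c \<alpha> \<noteq> 0}. c \<alpha> * (\<Prod>k<n. z k ^ \<alpha> k))"

definition mpoly_deg :: "nat \<Rightarrow> ((nat \<Rightarrow> nat) \<Rightarrow> complex) \<Rightarrow> nat" where
  "mpoly_deg n c = Max (insert 0 {(\<Sum>k<n. \<alpha> k) | \<alpha>. c \<alpha> \<noteq> 0})"

definition rational_rep :: "nat \<Rightarrow> nat \<Rightarrow> ((nat \<Rightarrow> complex) \<Rightarrow> (nat \<Rightarrow> complex)) \<Rightarrow> nat \<Rightarrow> bool" where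
  "rational_rep n m F d \<longleftrightarrow> (\<exists>P R. is_mpoly n R \<and> (\<exists>\<alpha>. R \<alpha> \<noteq> 0) \<and> mpoly_deg n R \<le> d \<and>
      (\<forall>j<m. is_mpoly n (P j) \<and> mpoly_deg n (P j) \<le> d) \<and>
      (\<forall>z\<in>unit_ball n. \<forall>j<m. mpoly_eval n R z * F z j = mpoly_eval n (P j) z))"

definition is_rational_map :: "nat \<Rightarrow> nat \<Rightarrow> ((nat \<Rightarrow> complex) \<Rightarrow> (nat \<Rightarrow> complex)) \<Rightarrow> bool" where
  "is_rational_map n m F \<longleftrightarrow> (\<exists>d. rational_rep n m F d)"

text \<open>deg(F) = max degree in the lowest-terms representation, which equals the
minimal such max degree over all representations.\<close>
definition rat_deg :: "nat \<Rightarrow> nat \<Rightarrow> ((nat \<Rightarrow> complex) \<Rightarrow> (nat \<Rightarrow> complex)) \<Rightarrow> nat" where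
  "rat_deg n m F = (LEAST d. rational_rep n m F d)"

definition orthogonal_mat :: "nat \<Rightarrow> (nat \<Rightarrow> nat \<Rightarrow> real) \<Rightarrow> bool" where
  "orthogonal_mat m Q \<longleftrightarrow> (\<forall>i<m. \<forall>j<m. (\<Sum>k<m. Q k i * Q k j) = (if i = j then 1 else 0))"

text \<open>The model vector (sqrt2/2 z_1, sqrt(-2)/2 z_1, ..., sqrt2/2 z_n, sqrt(-2)/2 z_n, 0, ..., 0),
0-based: position 2k holds sqrt2/2 z_k, position 2k+1 holds sqrt(-2)/2 z_k = i sqrt2/2 z_k.\<close>
definition model_vec :: "nat \<Rightarrow> (nat \<Rightarrow> complex) \<Rightarrow> nat \<Rightarrow> complex" where
  "model_vec n z i = (if i < 2 * n then
       (if even i then complex_of_real (sqrt 2 / 2) * z (i div 2)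
        else \<i> * complex_of_real (sqrt 2 / 2) * z (i div 2))
     else 0)"

end

theory Submission
  imports Defs "HOL-Computational_Algebra.Polynomial"
begin

lemma wirtinger:
  fixes f :: "(nat \<Rightarrow> complex) \<Rightarrow> complex" and g :: "complex \<Rightarrow> complex \<Rightarrow> complex"
  assumes dpos: "\<delta> > 0"
    and eq: "\<And>\<zeta>. cmod \<zeta> < \<delta> \<Longrightarrow> f (z(j := z j + \<zeta>)) = g \<zeta> (cnj \<zeta>)"
    and d: "\<And>c. c = 1 \<or> c = \<i> \<Longrightarrow> ((\<lambda>\<zeta>. g (c*\<zeta>) (cnj c*\<zeta>)) has_field_derivative (c*ga + cnj c*gb)) (at 0)"
  shows "dz j f z = ga" "dzbar j f z = gb"
proof -
  have gen: "vector_derivative (\<lambda>t::real. f (z(j := z j + c * complex_of_real t))) (at 0) = c*ga + cnj c*gb"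
    if c: "c = 1 \<or> c = \<i>" for c
  proof -
    have cm: "cmod c = 1" using c by auto
    have h1: "((\<lambda>t::real. g (c * of_real t) (cnj c * of_real t)) has_vector_derivative (c*ga + cnj c*gb)) (at 0)"
      using has_vector_derivative_real_field[of "\<lambda>\<zeta>. g (c*\<zeta>) (cnj c*\<zeta>)" "c*ga + cnj c*gb" 0 UNIV] d[OF c]
      by simp
    have h2: "((\<lambda>t::real. f (z(j := z j + c * of_real t))) has_vector_derivative (c*ga + cnj c*gb)) (at 0)"
    proof (rule has_vector_derivative_transform_within_open[OF h1, of "ball 0 \<delta>"])
      show "open (ball (0::real) \<delta>)" by simp
      show "(0::real) \<in> ball 0 \<delta>" using dpos by simp
      fix t :: real assume "t \<in> ball 0 \<delta>"
      hence "cmod (c * of_real t) < \<delta>" using cm by (simp add: norm_mult)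
      from eq[OF this] show "g (c * of_real t) (cnj c * of_real t) = f (z(j := z j + c * of_real t))"
        by simp
    qed
    show ?thesis using vector_derivative_at[OF h2] .
  qed
  have dx: "dx j f z = ga + gb" using gen[of 1] by (simp add: dx_def)
  have dy: "dy j f z = \<i>*ga - \<i>*gb" using gen[of \<i>] by (simp add: dy_def)
  show "dz j f z = ga" unfolding dz_def dx dy by (simp add: algebra_simps)
  show "dzbar j f z = gb" unfolding dzbar_def dx dy by (simp add: algebra_simps)
qed

lemma cns: "(complex_of_real (cmod z))^2 = z * cnj z"
  using complex_norm_square[of z] by simp

lemma normsq_upd:
  assumes "k < N"
  shows "complex_of_real (normsq N (z(k := v))) = of_real (normsq N z) - z k * cnj (z k) + v * cnj v"
proof -
  have "normsq N (z(k := v)) = normsq N z - (cmod (z k))^2 + (cmod v)^2"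
    unfolding normsq_def using assms
    by (simp add: sum.remove[of "{..<N}" k] )
  thus ?thesis using complex_norm_square[of v] complex_norm_square[of "z k"] by simp
qed

lemma sumsq_upd:
  fixes z :: "nat \<Rightarrow> complex"
  assumes "k < N"
  shows "(\<Sum>i<N. ((z(k := v)) i)^2) = (\<Sum>i<N. (z i)^2) - (z k)^2 + v^2"
proof -
  have fin: "finite {..<N}" "k \<in> {..<N}" using assms by auto
  have "(\<Sum>i<N. ((z(k := v)) i)^2) = v^2 + (\<Sum>i\<in>{..<N}-{k}. ((z(k := v)) i)^2)"
    using sum.remove[OF fin, of "\<lambda>i. ((z(k := v)) i)^2"] by simp
  also have "(\<Sum>i\<in>{..<N}-{k}. ((z(k := v)) i)^2) = (\<Sum>i\<in>{..<N}-{k}. (z i)^2)"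
    by (rule sum.cong) auto
  also have "\<dots> = (\<Sum>i<N. (z i)^2) - (z k)^2"
    using sum.remove[OF fin, of "\<lambda>i. (z i)^2"] by simp
  finally show ?thesis by simp
qed

lemma pos_near:
  fixes \<phi> :: "complex \<Rightarrow> real"
  assumes "continuous (at 0) \<phi>" "\<phi> 0 > 0"
  shows "\<exists>\<delta>>0. \<forall>\<zeta>. cmod \<zeta> < \<delta> \<longrightarrow> \<phi> \<zeta> > 0"
proof -
  from assms have "\<forall>\<^sub>F \<zeta> in nhds 0. \<phi> \<zeta> > 0"
    by (metis continuous_at order_tendstoD(1) tendsto_at_iff_tendsto_nhds)
  then obtain \<delta> where "\<delta> > 0" "\<forall>\<zeta>. dist \<zeta> 0 < \<delta> \<longrightarrow> \<phi> \<zeta> > 0"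
    by (auto simp: eventually_nhds_metric)
  thus ?thesis by auto
qed

lemma normsq_upd_real:
  assumes "k < N"
  shows "normsq N (z(k := v)) = normsq N z - (cmod (z k))^2 + (cmod v)^2"
  unfolding normsq_def using assms by (simp add: sum.remove[of "{..<N}" k])

lemma pos_not_nonpos: "r > 0 \<Longrightarrow> complex_of_real r \<notin> \<real>\<^sub>\<le>\<^sub>0"
  by (simp add: complex_nonpos_Reals_iff)

lemma dzbar_lnKball:
  assumes S1: "normsq n w < 1" and k: "k < n"
  shows "dzbar k (\<lambda>v. complex_of_real (ln (K_ball n v))) w
           = of_nat (n+1) * w k / (1 - of_real (normsq n w))"
proof -
  define S where "S = normsq n w"
  define a where "a = w k"
  define N where "N = (of_nat (n+1) :: complex)"
  define g where "g = (\<lambda>\<zeta> \<eta>. - N * Ln (1 - (of_real S - a * cnj a + (a + \<zeta>) * (cnj a + \<eta>))))"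
  have "\<exists>\<delta>>0. \<forall>\<zeta>. cmod \<zeta> < \<delta> \<longrightarrow> 1 - (S - (cmod a)^2 + (cmod (a + \<zeta>))^2) > 0"
    by (rule pos_near) (auto intro!: continuous_intros simp: S_def S1)
  then obtain \<delta> where dp: "\<delta> > 0" and dd: "\<And>\<zeta>. cmod \<zeta> < \<delta> \<Longrightarrow> 1 - (S - (cmod a)^2 + (cmod (a + \<zeta>))^2) > 0"
    by blast
  have res: "dzbar k (\<lambda>v. complex_of_real (ln (K_ball n v))) w = N * a / (1 - of_real S)"
  proof (rule wirtinger(2)[OF dp, where g=g and ga="N * cnj a / (1 - of_real S)"])
    fix \<zeta> :: complex assume z: "cmod \<zeta> < \<delta>"
    have ns: "normsq n (w(k := w k + \<zeta>)) = S - (cmod a)^2 + (cmod (a + \<zeta>))^2"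
      using normsq_upd_real[OF k] by (simp add: S_def a_def)
    have nsc: "complex_of_real (normsq n (w(k := w k + \<zeta>))) = of_real S - a * cnj a + (a + \<zeta>) * (cnj a + cnj \<zeta>)"
      using normsq_upd[OF k, of w "w k + \<zeta>"] by (simp add: S_def a_def)
    have pos: "1 - normsq n (w(k := w k + \<zeta>)) > 0" using dd[OF z] ns by simp
    have "complex_of_real (ln (K_ball n (w(k := w k + \<zeta>))))
          = - N * of_real (ln (1 - normsq n (w(k := w k + \<zeta>))))"
      by (simp add: K_ball_def N_def)
    also have "of_real (ln (1 - normsq n (w(k := w k + \<zeta>)))) = Ln (of_real (1 - normsq n (w(k := w k + \<zeta>))))"
      using Ln_of_real[OF pos] by simp
    also have "\<dots> = Ln (1 - (of_real S - a * cnj a + (a + \<zeta>) * (cnj a + cnj \<zeta>)))"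
      using nsc by simp
    finally have X: "complex_of_real (ln (K_ball n (w(k := w k + \<zeta>)))) = - N * Ln (1 - (of_real S - a * cnj a + (a + \<zeta>) * (cnj a + cnj \<zeta>)))" .
    show "complex_of_real (ln (K_ball n (w(k := w k + \<zeta>)))) = g \<zeta> (cnj \<zeta>)"
      unfolding g_def by (rule X)
  next
    fix c :: complex assume c: "c = 1 \<or> c = \<i>"
    have X0: "1 - (complex_of_real S - a * cnj a + (a + c * 0) * (cnj a + cnj c * 0)) = of_real (1 - S)"
      by simp
    have nn: "1 - (complex_of_real S - a * cnj a + (a + c * 0) * (cnj a + cnj c * 0)) \<notin> \<real>\<^sub>\<le>\<^sub>0"
      unfolding X0 by (rule pos_not_nonpos) (simp add: S_def S1)
    have ne: "1 - complex_of_real S \<noteq> 0"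
      using S1 by (metis S_def diff_gt_0_iff_gt of_real_1 of_real_diff of_real_eq_0_iff order_less_irrefl)
    show "((\<lambda>\<zeta>. g (c*\<zeta>) (cnj c*\<zeta>)) has_field_derivative (c * (N * cnj a / (1 - of_real S)) + cnj c * (N * a / (1 - of_real S)))) (at 0)"
      unfolding g_def
      apply (rule derivative_eq_intros refl nn)+
      using ne apply (simp add: inverse_eq_divide)
      apply (simp add: divide_simps)
      apply (simp add: algebra_simps)
      done
  qed
  thus ?thesis by (simp add: S_def a_def N_def)
qed

lemma bergman_ball:
  assumes S1: "normsq n z < 1" and j: "j < n" and k: "k < n"
  shows "bergman_coeff (K_ball n) j k z =
     of_nat (n+1) * ((if j = k then 1 else 0) / (1 - of_real (normsq n z))
                     + z k * cnj (z j) / (1 - of_real (normsq n z))^2)"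
proof -
  define S where "S = normsq n z"
  define a where "a = z j"
  define b where "b = z k"
  define d where "d = (if j = k then 1 else 0 :: complex)"
  define N where "N = (of_nat (n+1) :: complex)"
  define g where "g = (\<lambda>\<zeta> \<eta>. N * (b + d * \<zeta>) / (1 - (of_real S - a * cnj a + (a + \<zeta>) * (cnj a + \<eta>))))"
  have "\<exists>\<delta>>0. \<forall>\<zeta>. cmod \<zeta> < \<delta> \<longrightarrow> 1 - (S - (cmod a)^2 + (cmod (a + \<zeta>))^2) > 0"
    by (rule pos_near) (auto intro!: continuous_intros simp: S_def S1)
  then obtain \<delta> where dp: "\<delta> > 0" and dd: "\<And>\<zeta>. cmod \<zeta> < \<delta> \<Longrightarrow> 1 - (S - (cmod a)^2 + (cmod (a + \<zeta>))^2) > 0"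
    by blast
  have res: "dz j (dzbar k (\<lambda>v. complex_of_real (ln (K_ball n v)))) z
     = N * (d / (1 - of_real S) + b * cnj a / (1 - of_real S)^2)"
  proof (rule wirtinger(1)[OF dp, where g=g and gb="N * b * a / (1 - of_real S)^2"])
    fix \<zeta> :: complex assume zz: "cmod \<zeta> < \<delta>"
    have ns: "normsq n (z(j := z j + \<zeta>)) = S - (cmod a)^2 + (cmod (a + \<zeta>))^2"
      using normsq_upd_real[OF j] by (simp add: S_def a_def)
    have nsc: "complex_of_real (normsq n (z(j := z j + \<zeta>))) = of_real S - a * cnj a + (a + \<zeta>) * (cnj a + cnj \<zeta>)"
      using normsq_upd[OF j, of z "z j + \<zeta>"] by (simp add: S_def a_def)
    have pos: "normsq n (z(j := z j + \<zeta>)) < 1" using dd[OF zz] ns by simp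
    have zk: "(z(j := z j + \<zeta>)) k = b + d * \<zeta>" by (simp add: b_def d_def a_def)
    have "dzbar k (\<lambda>v. complex_of_real (ln (K_ball n v))) (z(j := z j + \<zeta>))
        = N * (b + d * \<zeta>) / (1 - (of_real S - a * cnj a + (a + \<zeta>) * (cnj a + cnj \<zeta>)))"
      using dzbar_lnKball[OF pos k] unfolding zk nsc by (simp add: N_def)
    thus "dzbar k (\<lambda>v. complex_of_real (ln (K_ball n v))) (z(j := z j + \<zeta>)) = g \<zeta> (cnj \<zeta>)"
      unfolding g_def .
  next
    fix c :: complex assume c: "c = 1 \<or> c = \<i>"
    have ne: "1 - complex_of_real S \<noteq> 0"
      using S1 by (metis S_def diff_gt_0_iff_gt of_real_1 of_real_diff of_real_eq_0_iff order_less_irrefl)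
    have ne0: "1 - (complex_of_real S - a * cnj a + (a + c * 0) * (cnj a + cnj c * 0)) \<noteq> 0"
      using ne by simp
    show "((\<lambda>\<zeta>. g (c*\<zeta>) (cnj c*\<zeta>)) has_field_derivative
        (c * (N * (d / (1 - of_real S) + b * cnj a / (1 - of_real S)^2)) + cnj c * (N * b * a / (1 - of_real S)^2))) (at 0)"
      unfolding g_def
      apply (rule derivative_eq_intros refl ne0)+
      using ne apply (simp add: inverse_eq_divide)
      apply (simp add: divide_simps)
      apply (simp add: algebra_simps power2_eq_square)
      done
  qed
  thus ?thesis by (simp add: bergman_coeff_def S_def a_def b_def d_def N_def)
qed

definition sIV :: "nat \<Rightarrow> (nat \<Rightarrow> complex) \<Rightarrow> complex" where
  "sIV m Z = (\<Sum>k<m. (Z k)^2)"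

lemma hIV_upd_real:
  assumes "k < m"
  shows "hIV m (Z(k := v)) = 1 - (normsq m Z - (cmod (Z k))^2 + (cmod v)^2) + (cmod (sIV m Z - (Z k)^2 + v^2))^2 / 4"
  unfolding hIV_def using normsq_upd_real[OF assms] sumsq_upd[OF assms] by (simp add: sIV_def)

lemma hIV_upd:
  assumes "k < m"
  shows "complex_of_real (hIV m (Z(k := v))) = 1 - (of_real (normsq m Z) - Z k * cnj (Z k) + v * cnj v)
     + (sIV m Z - (Z k)^2 + v^2) * (cnj (sIV m Z) - (cnj (Z k))^2 + (cnj v)^2) / 4"
proof -
  have "complex_of_real ((cmod (sIV m Z - (Z k)^2 + v^2))^2) = (sIV m Z - (Z k)^2 + v^2) * cnj (sIV m Z - (Z k)^2 + v^2)"
    by (rule complex_norm_square)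
  thus ?thesis unfolding hIV_upd_real[OF assms] using normsq_upd[OF assms, of Z v]
    using complex_norm_square[of v] complex_norm_square[of "Z k"] by simp
qed

lemma hIV_pos_near:
  assumes "hIV m Z > 0" "k < m"
  shows "\<exists>\<delta>>0. \<forall>\<zeta>. cmod \<zeta> < \<delta> \<longrightarrow> hIV m (Z(k := Z k + \<zeta>)) > 0"
proof -
  have "\<exists>\<delta>>0. \<forall>\<zeta>. cmod \<zeta> < \<delta> \<longrightarrow> 1 - (normsq m Z - (cmod (Z k))^2 + (cmod (Z k + \<zeta>))^2) + (cmod (sIV m Z - (Z k)^2 + (Z k + \<zeta>)^2))^2 / 4 > 0"
    by (rule pos_near) (use assms hIV_upd_real[OF assms(2), of Z "Z k"] in \<open>auto intro!: continuous_intros\<close>)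
  thus ?thesis using hIV_upd_real[OF assms(2)] by simp
qed

lemma dzbar_lnKIV:
  assumes h: "hIV m W > 0" and b: "b < m"
  shows "dzbar b (\<lambda>V. complex_of_real (ln (K_IV m V))) W
           = - of_nat m * (- W b + cnj (W b) * sIV m W / 2) / of_real (hIV m W)"
proof -
  define S where "S = normsq m W"
  define s where "s = sIV m W"
  define a where "a = W b"
  define M where "M = (of_nat m :: complex)"
  define H where "H = (\<lambda>\<zeta> \<eta>. 1 - (of_real S - a * cnj a + (a + \<zeta>) * (cnj a + \<eta>))
     + (s - a^2 + (a + \<zeta>)^2) * (cnj s - (cnj a)^2 + (cnj a + \<eta>)^2) / 4)"
  define g where "g = (\<lambda>\<zeta> \<eta>. - M * Ln (H \<zeta> \<eta>))"
  obtain \<delta> where dp: "\<delta> > 0" and dd: "\<And>\<zeta>. cmod \<zeta> < \<delta> \<Longrightarrow> hIV m (W(b := W b + \<zeta>)) > 0"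
    using hIV_pos_near[OF h b] by blast
  have H0: "H 0 0 = of_real (hIV m W)"
    using hIV_upd[OF b, of W "W b"] by (simp add: H_def S_def s_def a_def)
  have res: "dzbar b (\<lambda>V. complex_of_real (ln (K_IV m V))) W = - M * (- a + cnj a * s / 2) / H 0 0"
  proof (rule wirtinger(2)[OF dp, where g=g and ga="- M * (- cnj a + a * cnj s / 2) / H 0 0"])
    fix \<zeta> :: complex assume zz: "cmod \<zeta> < \<delta>"
    have pos: "hIV m (W(b := W b + \<zeta>)) > 0" using dd[OF zz] .
    have hc: "complex_of_real (hIV m (W(b := W b + \<zeta>))) = H \<zeta> (cnj \<zeta>)"
      using hIV_upd[OF b, of W "W b + \<zeta>"] by (simp add: H_def S_def s_def a_def)
    have "complex_of_real (ln (K_IV m (W(b := W b + \<zeta>)))) = - M * of_real (ln (hIV m (W(b := W b + \<zeta>))))"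
      by (simp add: K_IV_def M_def)
    also have "of_real (ln (hIV m (W(b := W b + \<zeta>)))) = Ln (of_real (hIV m (W(b := W b + \<zeta>))))"
      using Ln_of_real[OF pos] by simp
    finally have X: "complex_of_real (ln (K_IV m (W(b := W b + \<zeta>)))) = - M * Ln (H \<zeta> (cnj \<zeta>))"
      unfolding hc .
    show "complex_of_real (ln (K_IV m (W(b := W b + \<zeta>)))) = g \<zeta> (cnj \<zeta>)"
      unfolding g_def by (rule X)
  next
    fix c :: complex assume c: "c = 1 \<or> c = \<i>"
    have nn: "H 0 0 \<notin> \<real>\<^sub>\<le>\<^sub>0" using H0 h by (simp add: pos_not_nonpos)
    have ne: "H 0 0 \<noteq> 0" using H0 h by simp
    define Hd where "Hd = -(c*cnj a + cnj c*a) + (2*a*c*cnj s + s*2*cnj a*cnj c)/4"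
    have dH: "((\<lambda>\<zeta>. H (c*\<zeta>) (cnj c*\<zeta>)) has_field_derivative Hd) (at 0)"
      unfolding H_def Hd_def by (auto intro!: derivative_eq_intros simp: algebra_simps)
    have Hc0: "H (c*0) (cnj c*0) = H 0 0" by simp
    have d1: "((\<lambda>\<zeta>. Ln (H (c*\<zeta>) (cnj c*\<zeta>))) has_field_derivative (inverse (H 0 0) * Hd)) (at 0)"
    proof (rule DERIV_chain2[where f=Ln and g="\<lambda>\<zeta>. H (c*\<zeta>) (cnj c*\<zeta>)"])
      show "(Ln has_field_derivative inverse (H 0 0)) (at ((\<lambda>\<zeta>. H (c*\<zeta>) (cnj c*\<zeta>)) 0))"
        using has_field_derivative_Ln[OF nn] by simp
      show "((\<lambda>\<zeta>. H (c*\<zeta>) (cnj c*\<zeta>)) has_field_derivative Hd) (at 0)" by (rule dH)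
    qed
    have d2: "((\<lambda>\<zeta>. g (c*\<zeta>) (cnj c*\<zeta>)) has_field_derivative (- M * (inverse (H 0 0) * Hd))) (at 0)"
      unfolding g_def by (rule DERIV_cmult[OF d1])
    show "((\<lambda>\<zeta>. g (c*\<zeta>) (cnj c*\<zeta>)) has_field_derivative
        (c * (- M * (- cnj a + a * cnj s / 2) / H 0 0) + cnj c * (- M * (- a + cnj a * s / 2) / H 0 0))) (at 0)"
      apply (rule DERIV_cong[OF d2])
      using ne unfolding Hd_def by (simp add: field_simps)
  qed
  thus ?thesis by (simp add: H0 a_def s_def M_def)
qed

lemma cnj_delta: "cnj (if P then 1 else 0 :: complex) = (if P then 1 else 0)" by simp

lemma bergman_IV:
  assumes h: "hIV m Z > 0" and a: "a < m" and b: "b < m"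
  shows "bergman_coeff (K_IV m) a b Z =
     - of_nat m * (((if a = b then -1 else 0) + Z a * cnj (Z b)) / of_real (hIV m Z)
        - (- Z b + cnj (Z b) * sIV m Z / 2) * (- cnj (Z a) + Z a * cnj (sIV m Z) / 2) / (of_real (hIV m Z))^2)"
proof -
  define S where "S = normsq m Z"
  define s where "s = sIV m Z"
  define za where "za = Z a"
  define zb where "zb = Z b"
  define d where "d = (if a = b then 1 else 0 :: complex)"
  define M where "M = (of_nat m :: complex)"
  define H where "H = (\<lambda>\<zeta> \<eta>. 1 - (of_real S - za * cnj za + (za + \<zeta>) * (cnj za + \<eta>))
     + (s - za^2 + (za + \<zeta>)^2) * (cnj s - (cnj za)^2 + (cnj za + \<eta>)^2) / 4)"
  define Nm where "Nm = (\<lambda>\<zeta> \<eta>. - (zb + d * \<zeta>) + (cnj zb + d * \<eta>) * (s - za^2 + (za + \<zeta>)^2) / 2)"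
  define g where "g = (\<lambda>\<zeta> \<eta>. - M * (Nm \<zeta> \<eta> / H \<zeta> \<eta>))"
  obtain \<delta> where dp: "\<delta> > 0" and dd: "\<And>\<zeta>. cmod \<zeta> < \<delta> \<Longrightarrow> hIV m (Z(a := Z a + \<zeta>)) > 0"
    using hIV_pos_near[OF h a] by blast
  have H0: "H 0 0 = of_real (hIV m Z)"
    using hIV_upd[OF a, of Z "Z a"] by (simp add: H_def S_def s_def za_def)
  have ne: "H 0 0 \<noteq> 0" using H0 h by simp
  have cd: "cnj d = d" by (simp add: d_def)
  define GB where "GB = - M * (d * s / 2 / H 0 0 - (- zb + cnj zb * s / 2) * (- za + cnj za * s / 2) / (H 0 0)^2)"
  have res: "dz a (dzbar b (\<lambda>V. complex_of_real (ln (K_IV m V)))) Z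
     = - M * ((- d + za * cnj zb) / H 0 0 - (- zb + cnj zb * s / 2) * (- cnj za + za * cnj s / 2) / (H 0 0)^2)"
  proof (rule wirtinger(1)[OF dp, where g=g and gb=GB])
    fix \<zeta> :: complex assume zz: "cmod \<zeta> < \<delta>"
    have pos: "hIV m (Z(a := Z a + \<zeta>)) > 0" using dd[OF zz] .
    have hc: "complex_of_real (hIV m (Z(a := Z a + \<zeta>))) = H \<zeta> (cnj \<zeta>)"
      using hIV_upd[OF a, of Z "Z a + \<zeta>"] by (simp add: H_def S_def s_def za_def)
    have zb': "(Z(a := Z a + \<zeta>)) b = zb + d * \<zeta>" by (simp add: zb_def d_def za_def)
    have czb': "cnj ((Z(a := Z a + \<zeta>)) b) = cnj zb + d * cnj \<zeta>" using cd by (simp add: zb_def d_def za_def)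
    have sv: "sIV m (Z(a := Z a + \<zeta>)) = s - za^2 + (za + \<zeta>)^2"
      using sumsq_upd[OF a, of Z "Z a + \<zeta>"] by (simp add: sIV_def s_def za_def)
    have "dzbar b (\<lambda>V. complex_of_real (ln (K_IV m V))) (Z(a := Z a + \<zeta>))
        = - M * (Nm \<zeta> (cnj \<zeta>) / H \<zeta> (cnj \<zeta>))"
      unfolding dzbar_lnKIV[OF pos b] zb' czb' sv hc[symmetric] Nm_def M_def using cd by simp
    thus "dzbar b (\<lambda>V. complex_of_real (ln (K_IV m V))) (Z(a := Z a + \<zeta>)) = g \<zeta> (cnj \<zeta>)"
      unfolding g_def .
  next
    fix c :: complex assume c: "c = 1 \<or> c = \<i>"
    define Hd where "Hd = -(c*cnj za + cnj c*za) + (2*za*c*cnj s + s*2*cnj za*cnj c)/4"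
    have dH: "((\<lambda>\<zeta>. H (c*\<zeta>) (cnj c*\<zeta>)) has_field_derivative Hd) (at 0)"
      unfolding H_def Hd_def by (auto intro!: derivative_eq_intros simp: algebra_simps)
    define Nd where "Nd = - d * c + d * cnj c * s / 2 + cnj zb * (2 * za * c) / 2"
    have dN: "((\<lambda>\<zeta>. Nm (c*\<zeta>) (cnj c*\<zeta>)) has_field_derivative Nd) (at 0)"
      unfolding Nm_def Nd_def by (auto intro!: derivative_eq_intros simp: algebra_simps)
    have ne': "(\<lambda>\<zeta>. H (c*\<zeta>) (cnj c*\<zeta>)) 0 \<noteq> 0" using ne by simp
    have d1: "((\<lambda>\<zeta>. Nm (c*\<zeta>) (cnj c*\<zeta>) / H (c*\<zeta>) (cnj c*\<zeta>)) has_field_derivative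
        (Nd * H 0 0 - Nm 0 0 * Hd) / (H 0 0 * H 0 0)) (at 0)"
      using DERIV_divide[OF dN dH ne'] by simp
    have d2: "((\<lambda>\<zeta>. g (c*\<zeta>) (cnj c*\<zeta>)) has_field_derivative (- M * ((Nd * H 0 0 - Nm 0 0 * Hd) / (H 0 0 * H 0 0)))) (at 0)"
      unfolding g_def by (rule DERIV_cmult[OF d1])
    show "((\<lambda>\<zeta>. g (c*\<zeta>) (cnj c*\<zeta>)) has_field_derivative
        (c * (- M * ((- d + za * cnj zb) / H 0 0 - (- zb + cnj zb * s / 2) * (- cnj za + za * cnj s / 2) / (H 0 0)^2)) + cnj c * GB)) (at 0)"
      apply (rule DERIV_cong[OF d2])
      using ne unfolding Hd_def Nd_def GB_def Nm_def by (simp add: field_simps power2_eq_square)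
  qed
  have "bergman_coeff (K_IV m) a b Z = - M * ((- d + za * cnj zb) / H 0 0 - (- zb + cnj zb * s / 2) * (- cnj za + za * cnj s / 2) / (H 0 0)^2)"
    using res by (simp add: bergman_coeff_def)
  thus ?thesis unfolding H0 by (simp add: M_def d_def za_def zb_def s_def)
qed

definition linf :: "nat \<Rightarrow> (nat \<Rightarrow> complex) \<Rightarrow> (nat \<Rightarrow> complex) \<Rightarrow> complex" where
  "linf n r z = (\<Sum>k<n. r k * z k)"

lemma linf_upd: "j < n \<Longrightarrow> linf n r (z(j := v)) = linf n r z + r j * (v - z j)"
  unfolding linf_def by (simp add: sum.remove[of "{..<n}" j] algebra_simps)

lemma dz_F:
  assumes Feq: "\<forall>z\<in>unit_ball n. \<forall>a<m. (1 + linf n r z) * F z a = linf n (\<lambda>k. A k a) z"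
    and zb: "z \<in> unit_ball n" and Rz: "1 + linf n r z \<noteq> 0" and j: "j < n" and a: "a < m"
  shows "dz j (\<lambda>w. F w a) z = (A j a * (1 + linf n r z) - linf n (\<lambda>k. A k a) z * r j) / (1 + linf n r z)^2"
proof -
  define R0 where "R0 = 1 + linf n r z"
  define P0 where "P0 = linf n (\<lambda>k. A k a) z"
  define g where "g = (\<lambda>\<zeta> (\<eta>::complex). (P0 + A j a * \<zeta>) / (R0 + r j * \<zeta>))"
  have S1: "normsq n z < 1" and hi: "\<forall>k\<ge>n. z k = 0" using zb by (auto simp: unit_ball_def)
  have "\<exists>\<delta>>0. \<forall>\<zeta>. cmod \<zeta> < \<delta> \<longrightarrow> min (1 - (normsq n z - (cmod (z j))^2 + (cmod (z j + \<zeta>))^2)) (cmod (R0 + r j * \<zeta>)) > 0"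
    by (rule pos_near) (use S1 Rz in \<open>auto intro!: continuous_intros simp: R0_def\<close>)
  then obtain \<delta> where dp: "\<delta> > 0" and dd: "\<And>\<zeta>. cmod \<zeta> < \<delta> \<Longrightarrow> min (1 - (normsq n z - (cmod (z j))^2 + (cmod (z j + \<zeta>))^2)) (cmod (R0 + r j * \<zeta>)) > 0"
    by blast
  have res: "dz j (\<lambda>w. F w a) z = (A j a * R0 - P0 * r j) / R0^2"
  proof (rule wirtinger(1)[OF dp, where g=g and gb=0])
    fix \<zeta> :: complex assume zz: "cmod \<zeta> < \<delta>"
    have inb: "z(j := z j + \<zeta>) \<in> unit_ball n"
      using dd[OF zz] normsq_upd_real[OF j, of z "z j + \<zeta>"] hi j by (auto simp: unit_ball_def)
    have Rne: "1 + linf n r (z(j := z j + \<zeta>)) = R0 + r j * \<zeta>" by (simp add: linf_upd[OF j] R0_def)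
    have Pe: "linf n (\<lambda>k. A k a) (z(j := z j + \<zeta>)) = P0 + A j a * \<zeta>" by (simp add: linf_upd[OF j] P0_def)
    have nz: "R0 + r j * \<zeta> \<noteq> 0" using dd[OF zz] by auto
    have "(R0 + r j * \<zeta>) * F (z(j := z j + \<zeta>)) a = P0 + A j a * \<zeta>"
      using Feq inb a Rne Pe by metis
    thus "F (z(j := z j + \<zeta>)) a = g \<zeta> (cnj \<zeta>)" using nz unfolding g_def by (simp add: field_simps)
  next
    fix c :: complex assume c: "c = 1 \<or> c = \<i>"
    have ne: "R0 \<noteq> 0" using Rz by (simp add: R0_def)
    show "((\<lambda>\<zeta>. g (c*\<zeta>) (cnj c*\<zeta>)) has_field_derivative (c * ((A j a * R0 - P0 * r j) / R0^2) + cnj c * 0)) (at 0)"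
      unfolding g_def using ne
      by (auto intro!: derivative_eq_intros simp: field_simps power2_eq_square)
  qed
  thus ?thesis by (simp add: R0_def P0_def)
qed

lemma sum_contract:
  fixes G :: "nat \<Rightarrow> nat \<Rightarrow> complex" and D :: "nat \<Rightarrow> nat \<Rightarrow> complex" and u :: "nat \<Rightarrow> complex"
  shows "(\<Sum>j<n. \<Sum>k<n. u j * cnj (u k) * (\<Sum>a<m. \<Sum>b<m. G a b * D j a * cnj (D k b)))
       = (\<Sum>a<m. \<Sum>b<m. G a b * (\<Sum>j<n. u j * D j a) * cnj (\<Sum>k<n. u k * D k b))"
proof -
  have "(\<Sum>j<n. \<Sum>k<n. u j * cnj (u k) * (\<Sum>a<m. \<Sum>b<m. G a b * D j a * cnj (D k b)))
      = (\<Sum>j<n. \<Sum>k<n. \<Sum>a<m. \<Sum>b<m. G a b * (u j * D j a) * cnj (u k * D k b))"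
    by (simp add: sum_distrib_left algebra_simps)
  also have "\<dots> = (\<Sum>j<n. \<Sum>a<m. \<Sum>k<n. \<Sum>b<m. G a b * (u j * D j a) * cnj (u k * D k b))"
    by (rule sum.cong[OF refl]) (rule sum.swap)
  also have "\<dots> = (\<Sum>a<m. \<Sum>j<n. \<Sum>k<n. \<Sum>b<m. G a b * (u j * D j a) * cnj (u k * D k b))"
    by (rule sum.swap)
  also have "\<dots> = (\<Sum>a<m. \<Sum>j<n. \<Sum>b<m. \<Sum>k<n. G a b * (u j * D j a) * cnj (u k * D k b))"
    by (intro sum.cong refl sum.swap)
  also have "\<dots> = (\<Sum>a<m. \<Sum>b<m. \<Sum>j<n. \<Sum>k<n. G a b * (u j * D j a) * cnj (u k * D k b))"
    by (intro sum.cong refl sum.swap)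
  also have "\<dots> = (\<Sum>a<m. \<Sum>b<m. G a b * (\<Sum>j<n. u j * D j a) * cnj (\<Sum>k<n. u k * D k b))"
    by (simp add: sum_distrib_left sum_distrib_right cnj_sum algebra_simps)
  finally show ?thesis .
qed

lemma sum_G:
  fixes X Y U V p q :: "nat \<Rightarrow> complex" and M ih ih2 :: complex
  shows "(\<Sum>a<m. \<Sum>b<m. (- M * (((if a = b then -1 else 0) + X a * Y b) * ih - U b * V a * ih2)) * p a * q b)
     = - M * ((- (\<Sum>a<m. p a * q a) + (\<Sum>a<m. X a * p a) * (\<Sum>b<m. Y b * q b)) * ih
              - (\<Sum>b<m. U b * q b) * (\<Sum>a<m. V a * p a) * ih2)"
proof -
  have e1: "(\<Sum>a<m. \<Sum>b<m. (if a = b then -1 else 0) * p a * q b) = - (\<Sum>a<m. p a * q a)"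
  proof -
    have "(\<Sum>a<m. \<Sum>b<m. (if a = b then -1 else 0) * p a * q b) = (\<Sum>a<m. - (p a * q a))"
    proof (rule sum.cong[OF refl])
      fix a assume "a \<in> {..<m}"
      have "(\<Sum>b<m. (if a = b then -1 else 0) * p a * q b) = (\<Sum>b<m. if b = a then - (p a * q b) else 0)"
        by (rule sum.cong) auto
      also have "\<dots> = - (p a * q a)" using \<open>a \<in> {..<m}\<close> by (simp add: sum.delta)
      finally show "(\<Sum>b<m. (if a = b then -1 else 0) * p a * q b) = - (p a * q a)" .
    qed
    thus ?thesis by (simp add: sum_negf)
  qed
  have e2: "(\<Sum>a<m. \<Sum>b<m. X a * Y b * p a * q b) = (\<Sum>a<m. X a * p a) * (\<Sum>b<m. Y b * q b)"
    by (simp add: sum_product algebra_simps)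
  have e3: "(\<Sum>a<m. \<Sum>b<m. U b * V a * p a * q b) = (\<Sum>b<m. U b * q b) * (\<Sum>a<m. V a * p a)"
    by (simp add: sum_product algebra_simps) (rule sum.swap)
  have "(\<Sum>a<m. \<Sum>b<m. (- M * (((if a = b then -1 else 0) + X a * Y b) * ih - U b * V a * ih2)) * p a * q b)
     = (\<Sum>a<m. \<Sum>b<m. (- M * ih) * ((if a = b then -1 else 0) * p a * q b) + (- M * ih) * (X a * Y b * p a * q b)
          + (M * ih2) * (U b * V a * p a * q b))"
    by (intro sum.cong refl) (simp add: algebra_simps)
  also have "\<dots> = (- M * ih) * (\<Sum>a<m. \<Sum>b<m. (if a = b then -1 else 0) * p a * q b)
       + (- M * ih) * (\<Sum>a<m. \<Sum>b<m. X a * Y b * p a * q b) + (M * ih2) * (\<Sum>a<m. \<Sum>b<m. U b * V a * p a * q b)"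
    by (simp only: sum.distrib sum_distrib_left)
  also have "\<dots> = - M * ((- (\<Sum>a<m. p a * q a) + (\<Sum>a<m. X a * p a) * (\<Sum>b<m. Y b * q b)) * ih
              - (\<Sum>b<m. U b * q b) * (\<Sum>a<m. V a * p a) * ih2)"
    unfolding e1 e2 e3 by (simp add: algebra_simps)
  finally show ?thesis .
qed

lemma scalar_id:
  fixes R cR sg csg P x M h :: complex
  assumes R: "R \<noteq> 0" "cR \<noteq> 0" and hh: "h = 1 - x^2 * P / (R*cR) + x^4 * sg * csg / (4 * (R*cR)^2)" and h0: "h \<noteq> 0"
  shows "- M * ((- (P / (R*cR)^2) + (x * sg / R^3) * (x * csg / cR^3)) * inverse h
        - (- x * P / (R * cR^2) + (x^2 * sg / R^2) / 2 * (x * csg / cR^3))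
          * (- x * P / (cR * R^2) + (x^2 * csg / cR^2) / 2 * (x * sg / R^3)) * inverse (h^2))
       = M * (P * (R*cR)^2 - x^2 * (sg*csg) * (R*cR) + x^4 * P * (sg*csg) / 4) / ((R*cR)^2 * h)^2"
proof -
  define W where "W = R * cR"
  define S where "S = sg * csg"
  have W0: "W \<noteq> 0" using R by (simp add: W_def)
  have s1: "(x * sg / R^3) * (x * csg / cR^3) = x^2 * S / W^3"
    by (simp add: W_def S_def power_mult_distrib power2_eq_square)
  have s2: "(- x * P / (R * cR^2) + (x^2 * sg / R^2) / 2 * (x * csg / cR^3))
          * (- x * P / (cR * R^2) + (x^2 * csg / cR^2) / 2 * (x * sg / R^3))
        = x^2 * (P - x^2 * S / (2 * W))^2 / W^3"
  proof -
    have a: "- x * P / (R * cR^2) + (x^2 * sg / R^2) / 2 * (x * csg / cR^3) = - x / (R * cR^2) * (P - x^2 * S / (2 * W))"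
      using R by (simp add: W_def S_def field_simps power2_eq_square power3_eq_cube)
    have b: "- x * P / (cR * R^2) + (x^2 * csg / cR^2) / 2 * (x * sg / R^3) = - x / (cR * R^2) * (P - x^2 * S / (2 * W))"
      using R by (simp add: W_def S_def field_simps power2_eq_square power3_eq_cube)
    show ?thesis unfolding a b using R by (simp add: W_def field_simps power2_eq_square power3_eq_cube)
  qed
  have hW: "h = 1 - x^2 * P / W + x^4 * S / (4 * W^2)" by (simp add: hh W_def S_def mult.assoc)
  have fin: "- M * ((- (P / W^2) + x^2 * S / W^3) * inverse h - x^2 * (P - x^2 * S / (2 * W))^2 / W^3 * inverse (h^2))
      = M * (P * W^2 - x^2 * S * W + x^4 * P * S / 4) / (W^2 * h)^2"
  proof -
    define N where "N = W^2 - x^2 * P * W + x^4 * S / 4"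
    have hN: "h = N / W^2" unfolding hW N_def using W0 by (simp add: field_simps power2_eq_square)
    have N0: "N \<noteq> 0" using h0 W0 hN by auto
    have ih: "inverse h = W^2 / N" "inverse (h^2) = W^4 / N^2" unfolding hN using W0 N0
      by (simp_all add: field_simps power2_eq_square power4_eq_xxxx)
    have num: "(P - x^2 * S / W) * N + x^2 * W * (P - x^2 * S / (2 * W))^2 = P * W^2 - x^2 * S * W + x^4 * P * S / 4"
      unfolding N_def using W0 by (simp add: field_simps) algebra
    have "- M * ((- (P / W^2) + x^2 * S / W^3) * inverse h - x^2 * (P - x^2 * S / (2 * W))^2 / W^3 * inverse (h^2))
        = M * ((P - x^2 * S / W) * N + x^2 * W * (P - x^2 * S / (2 * W))^2) / N^2"
      unfolding ih using W0 N0 by (simp add: field_simps power2_eq_square power3_eq_cube power4_eq_xxxx)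
    also have "\<dots> = M * (P * W^2 - x^2 * S * W + x^4 * P * S / 4) / N^2" unfolding num ..
    also have "N^2 = (W^2 * h)^2" unfolding hN using W0 by simp
    finally show ?thesis .
  qed
  show ?thesis using fin unfolding s1 s2 W_def S_def by simp
qed

lemma pullback_contracted:
  fixes v :: "nat \<Rightarrow> complex" and R :: complex and x :: real and m :: nat
  defines "T \<equiv> (\<lambda>a. of_real x * v a / R)"
  defines "P \<equiv> (\<Sum>a<m. v a * cnj (v a))"
  defines "sg \<equiv> (\<Sum>a<m. (v a)^2)"
  assumes R: "R \<noteq> 0" and hpos: "hIV m T > 0"
  shows "complex_of_real (hIV m T) = 1 - of_real x^2 * P / (R * cnj R) + of_real x^4 * sg * cnj sg / (4 * (R * cnj R)^2)"
    and "(\<Sum>a<m. \<Sum>b<m. (- of_nat m * (((if a = b then -1 else 0) + T a * cnj (T b)) / of_real (hIV m T)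
        - (- T b + cnj (T b) * sIV m T / 2) * (- cnj (T a) + T a * cnj (sIV m T) / 2) / (of_real (hIV m T))^2))
          * (v a / R^2) * cnj (v b / R^2))
      = of_nat m * (P * (R*cnj R)^2 - of_real x^2 * (sg * cnj sg) * (R * cnj R) + of_real x^4 * P * (sg * cnj sg) / 4)
          / ((R * cnj R)^2 * of_real (hIV m T))^2"
proof -
  define X where "X = complex_of_real x"
  have cX: "cnj X = X" by (simp add: X_def)
  have cR: "cnj R \<noteq> 0" using R by simp
  have sT: "sIV m T = X^2 * sg / R^2"
    unfolding sIV_def T_def sg_def X_def by (simp add: power_divide power_mult_distrib sum_divide_distrib sum_distrib_left)
  have nT: "complex_of_real (normsq m T) = X^2 * P / (R * cnj R)"
  proof -
    have "complex_of_real (normsq m T) = (\<Sum>a<m. T a * cnj (T a))"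
      unfolding normsq_def of_real_sum by (intro sum.cong refl) (rule complex_norm_square)
    also have "\<dots> = (\<Sum>a<m. X^2 * (v a * cnj (v a)) / (R * cnj R))"
      by (intro sum.cong refl) (simp add: T_def X_def power2_eq_square)
    also have "\<dots> = X^2 * P / (R * cnj R)"
      by (simp add: P_def sum_divide_distrib sum_distrib_left)
    finally show ?thesis .
  qed
  have hT: "complex_of_real (hIV m T) = 1 - X^2 * P / (R * cnj R) + X^4 * sg * cnj sg / (4 * (R * cnj R)^2)"
  proof -
    have "complex_of_real (hIV m T) = 1 - of_real (normsq m T) + sIV m T * cnj (sIV m T) / 4"
      unfolding hIV_def by (simp add: cns sIV_def)
    thus ?thesis unfolding nT sT by (simp add: cX power2_eq_square power4_eq_xxxx field_simps)
  qed
  thus "complex_of_real (hIV m T) = 1 - of_real x^2 * P / (R * cnj R) + of_real x^4 * sg * cnj sg / (4 * (R * cnj R)^2)"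
    by (simp add: X_def)
  have h0: "complex_of_real (hIV m T) \<noteq> 0" using hpos by simp
  define U where "U = (\<lambda>b. - T b + cnj (T b) * sIV m T / 2)"
  define V where "V = (\<lambda>a. - cnj (T a) + T a * cnj (sIV m T) / 2)"
  have G: "(\<Sum>a<m. \<Sum>b<m. (- of_nat m * (((if a = b then -1 else 0) + T a * cnj (T b)) / of_real (hIV m T)
        - (- T b + cnj (T b) * sIV m T / 2) * (- cnj (T a) + T a * cnj (sIV m T) / 2) / (of_real (hIV m T))^2))
          * (v a / R^2) * cnj (v b / R^2))
     = - of_nat m * ((- (\<Sum>a<m. (v a / R^2) * cnj (v a / R^2)) + (\<Sum>a<m. T a * (v a / R^2)) * (\<Sum>b<m. cnj (T b) * cnj (v b / R^2))) * inverse (of_real (hIV m T))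
              - (\<Sum>b<m. U b * cnj (v b / R^2)) * (\<Sum>a<m. V a * (v a / R^2)) * inverse ((of_real (hIV m T))^2))"
    unfolding U_def V_def divide_inverse[of _ "complex_of_real (hIV m T)"] divide_inverse[of _ "(complex_of_real (hIV m T))^2"]
    by (rule sum_G)
  have s1: "(\<Sum>a<m. (v a / R^2) * cnj (v a / R^2)) = P / (R * cnj R)^2"
    unfolding P_def by (simp add: sum_divide_distrib power_mult_distrib field_simps)
  have s2: "(\<Sum>a<m. T a * (v a / R^2)) = X * sg / R^3"
    unfolding sg_def T_def X_def by (simp add: sum_divide_distrib sum_distrib_left power2_eq_square power3_eq_cube field_simps)
  have s3: "(\<Sum>b<m. cnj (T b) * cnj (v b / R^2)) = X * cnj sg / (cnj R)^3"
  proof -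
    have "(\<Sum>b<m. cnj (T b) * cnj (v b / R^2)) = cnj (\<Sum>a<m. T a * (v a / R^2))" by (simp add: cnj_sum)
    thus ?thesis unfolding s2 by (simp add: cX)
  qed
  have s4: "(\<Sum>b<m. T b * cnj (v b / R^2)) = X * P / (R * (cnj R)^2)"
    unfolding P_def T_def X_def by (simp add: sum_divide_distrib sum_distrib_left power2_eq_square field_simps)
  have s5: "(\<Sum>a<m. cnj (T a) * (v a / R^2)) = X * P / (cnj R * R^2)"
  proof -
    have "(\<Sum>a<m. cnj (T a) * (v a / R^2)) = cnj (\<Sum>b<m. T b * cnj (v b / R^2))" by (simp add: cnj_sum)
    thus ?thesis unfolding s4 by (simp add: cX P_def cnj_sum mult.commute)
  qed
  have sU: "(\<Sum>b<m. U b * cnj (v b / R^2)) = - X * P / (R * (cnj R)^2) + (X^2 * sg / R^2) / 2 * (X * cnj sg / (cnj R)^3)"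
  proof -
    have "(\<Sum>b<m. U b * cnj (v b / R^2)) = (\<Sum>b<m. - (T b * cnj (v b / R^2)) + sIV m T / 2 * (cnj (T b) * cnj (v b / R^2)))"
      unfolding U_def by (intro sum.cong refl) (simp add: algebra_simps)
    also have "\<dots> = - (\<Sum>b<m. T b * cnj (v b / R^2)) + sIV m T / 2 * (\<Sum>b<m. cnj (T b) * cnj (v b / R^2))"
      by (simp only: sum.distrib sum_negf sum_distrib_left)
    finally have "(\<Sum>b<m. U b * cnj (v b / R^2)) = - (\<Sum>b<m. T b * cnj (v b / R^2)) + sIV m T / 2 * (\<Sum>b<m. cnj (T b) * cnj (v b / R^2))" .
    thus ?thesis unfolding s3 s4 sT by simp
  qed
  have sV: "(\<Sum>a<m. V a * (v a / R^2)) = - X * P / (cnj R * R^2) + (X^2 * cnj sg / (cnj R)^2) / 2 * (X * sg / R^3)"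
  proof -
    have "(\<Sum>a<m. V a * (v a / R^2)) = (\<Sum>a<m. - (cnj (T a) * (v a / R^2)) + cnj (sIV m T) / 2 * (T a * (v a / R^2)))"
      unfolding V_def by (intro sum.cong refl) (simp add: algebra_simps)
    also have "\<dots> = - (\<Sum>a<m. cnj (T a) * (v a / R^2)) + cnj (sIV m T) / 2 * (\<Sum>a<m. T a * (v a / R^2))"
      by (simp only: sum.distrib sum_negf sum_distrib_left)
    finally have "(\<Sum>a<m. V a * (v a / R^2)) = - (\<Sum>a<m. cnj (T a) * (v a / R^2)) + cnj (sIV m T) / 2 * (\<Sum>a<m. T a * (v a / R^2))" .
    thus ?thesis unfolding s2 s5 sT by (simp add: cX)
  qed
  show "(\<Sum>a<m. \<Sum>b<m. (- of_nat m * (((if a = b then -1 else 0) + T a * cnj (T b)) / of_real (hIV m T)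
        - (- T b + cnj (T b) * sIV m T / 2) * (- cnj (T a) + T a * cnj (sIV m T) / 2) / (of_real (hIV m T))^2))
          * (v a / R^2) * cnj (v b / R^2))
      = of_nat m * (P * (R*cnj R)^2 - of_real x^2 * (sg * cnj sg) * (R * cnj R) + of_real x^4 * P * (sg * cnj sg) / 4)
          / ((R * cnj R)^2 * of_real (hIV m T))^2"
    unfolding G s1 s2 s3 sU sV
    using scalar_id[OF R cR hT h0, of "of_nat m"] by (simp add: X_def)
qed

lemma sIV_cong: "(\<And>a. a < m \<Longrightarrow> Z a = Z' a) \<Longrightarrow> sIV m Z = sIV m Z'"
  unfolding sIV_def by (rule sum.cong) auto

lemma normsq_cong: "(\<And>a. a < m \<Longrightarrow> Z a = Z' a) \<Longrightarrow> normsq m Z = normsq m Z'"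
  unfolding normsq_def by (rule sum.cong) auto

lemma hIV_cong: "(\<And>a. a < m \<Longrightarrow> Z a = Z' a) \<Longrightarrow> hIV m Z = hIV m Z'"
  using sIV_cong[of m Z Z'] normsq_cong[of m Z Z'] unfolding hIV_def sIV_def by simp

lemma linf_scale: "linf n r (\<lambda>k. c * u k) = c * linf n r u"
  unfolding linf_def by (simp add: sum_distrib_left algebra_simps)

lemma normsq_scale: "normsq n (\<lambda>k. complex_of_real x * u k) = x^2 * normsq n u"
  unfolding normsq_def by (simp add: norm_mult power_mult_distrib sum_distrib_left)

lemma frac_aux: "(d::complex) \<noteq> 0 \<Longrightarrow> q / d + (1 - d) * q / d^2 = q / d^2"
  by (simp add: field_simps power2_eq_square)

lemma line_identity:
  fixes u :: "nat \<Rightarrow> complex" and x :: real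
  assumes iso: "\<forall>z\<in>unit_ball n. \<forall>j<n. \<forall>k<n.
        pullback_coeff m (bergman_coeff (K_IV m)) F j k z = complex_of_real c * bergman_coeff (K_ball n) j k z"
    and img: "\<forall>z\<in>unit_ball n. F z \<in> typeIV m"
    and Feq: "\<forall>z\<in>unit_ball n. \<forall>a<m. (1 + linf n r z) * F z a = linf n (\<lambda>k. A k a) z"
    and zb: "(\<lambda>k. complex_of_real x * u k) \<in> unit_ball n"
    and Rne: "1 + complex_of_real x * linf n r u \<noteq> 0"
  defines "R \<equiv> 1 + complex_of_real x * linf n r u"
  defines "v \<equiv> (\<lambda>a. linf n (\<lambda>k. A k a) u)"
  defines "P \<equiv> (\<Sum>a<m. v a * cnj (v a))"
  defines "sg \<equiv> (\<Sum>a<m. (v a)^2)"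
  defines "q \<equiv> complex_of_real (normsq n u)"
  shows "of_nat m * (P * (R*cnj R)^2 - of_real x^2 * (sg * cnj sg) * (R * cnj R) + of_real x^4 * P * (sg * cnj sg) / 4)
          / ((R * cnj R)^2 * of_real (hIV m (\<lambda>a. of_real x * v a / R)))^2
        = of_real c * (of_nat (n+1) * (q / (1 - of_real x^2 * q)^2))"
    and "hIV m (\<lambda>a. of_real x * v a / R) > 0"
proof -
  define z where "z = (\<lambda>k. complex_of_real x * u k)"
  define T where "T = (\<lambda>a. of_real x * v a / R)"
  have zb': "z \<in> unit_ball n" using zb by (simp add: z_def)
  have Rz: "1 + linf n r z = R" by (simp add: z_def R_def linf_scale)
  have R0: "R \<noteq> 0" using Rne by (simp add: R_def)
  have FzT: "F z a = T a" if "a < m" for a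
  proof -
    have "R * F z a = linf n (\<lambda>k. A k a) z" using Feq zb' that Rz by metis
    also have "\<dots> = of_real x * v a" by (simp add: z_def v_def linf_scale)
    finally show ?thesis using R0 by (simp add: T_def field_simps)
  qed
  have hT: "hIV m (F z) = hIV m T" by (rule hIV_cong) (simp add: FzT)
  have sTT: "sIV m (F z) = sIV m T" by (rule sIV_cong) (simp add: FzT)
  have "F z \<in> typeIV m" using img zb' by blast
  hence hpos: "hIV m T > 0" using hT by (simp add: typeIV_def)
  thus "hIV m (\<lambda>a. of_real x * v a / R) > 0" by (simp add: T_def)
  have Du: "(\<Sum>j<n. u j * dz j (\<lambda>w. F w a) z) = v a / R^2" if a: "a < m" for a
  proof -
    have "(\<Sum>j<n. u j * dz j (\<lambda>w. F w a) z) = (\<Sum>j<n. u j * ((A j a * R - linf n (\<lambda>k. A k a) z * r j) / R^2))"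
      by (intro sum.cong refl) (use dz_F[OF Feq zb'] Rz R0 a in auto)
    also have "\<dots> = ((\<Sum>j<n. A j a * u j) * R - linf n (\<lambda>k. A k a) z * (\<Sum>j<n. r j * u j)) / R^2"
      by (simp add: sum_divide_distrib[symmetric] sum_distrib_left sum_distrib_right sum_subtractf algebra_simps)
    also have "\<dots> = (v a * R - of_real x * v a * linf n r u) / R^2"
      by (simp add: v_def linf_def z_def sum_distrib_left algebra_simps)
    also have "\<dots> = v a / R^2" by (simp add: R_def algebra_simps)
    finally show ?thesis .
  qed
  have LHS: "(\<Sum>j<n. \<Sum>k<n. u j * cnj (u k) * pullback_coeff m (bergman_coeff (K_IV m)) F j k z)
     = (\<Sum>a<m. \<Sum>b<m. (- of_nat m * (((if a = b then -1 else 0) + T a * cnj (T b)) / of_real (hIV m T)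
        - (- T b + cnj (T b) * sIV m T / 2) * (- cnj (T a) + T a * cnj (sIV m T) / 2) / (of_real (hIV m T))^2))
          * (v a / R^2) * cnj (v b / R^2))"
    unfolding pullback_coeff_def sum_contract
  proof (intro sum.cong refl)
    fix a b assume a: "a \<in> {..<m}" and b: "b \<in> {..<m}"
    show "bergman_coeff (K_IV m) a b (F z) * (\<Sum>j<n. u j * dz j (\<lambda>w. F w a) z) * cnj (\<Sum>k<n. u k * dz k (\<lambda>w. F w b) z)
      = (- of_nat m * (((if a = b then -1 else 0) + T a * cnj (T b)) / of_real (hIV m T)
        - (- T b + cnj (T b) * sIV m T / 2) * (- cnj (T a) + T a * cnj (sIV m T) / 2) / (of_real (hIV m T))^2))
          * (v a / R^2) * cnj (v b / R^2)"
      using bergman_IV[of m "F z" a b] hpos hT sTT a b Du[of a] Du[of b] FzT[of a] FzT[of b] by simp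
  qed
  have nz: "normsq n z = x^2 * normsq n u" by (simp add: z_def normsq_scale)
  have S1: "normsq n z < 1" using zb' by (simp add: unit_ball_def)
  have RHS: "(\<Sum>j<n. \<Sum>k<n. u j * cnj (u k) * bergman_coeff (K_ball n) j k z)
      = of_nat (n+1) * (q / (1 - of_real x^2 * q)^2)"
  proof -
    define D where "D = 1 - complex_of_real (normsq n z)"
    have D0: "D \<noteq> 0" using S1 unfolding D_def
      by (metis diff_gt_0_iff_gt of_real_1 of_real_diff of_real_eq_0_iff order_less_irrefl)
    define N where "N = (of_nat (n+1) :: complex)"
    have "(\<Sum>j<n. \<Sum>k<n. u j * cnj (u k) * bergman_coeff (K_ball n) j k z)
        = (\<Sum>j<n. \<Sum>k<n. N / D * (if k = j then u j * cnj (u k) else 0) + N / D^2 * ((u j * cnj (z j)) * (cnj (u k) * z k)))"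
      by (intro sum.cong refl) (use bergman_ball[OF S1] in \<open>auto simp: D_def N_def algebra_simps\<close>)
    also have "\<dots> = N / D * (\<Sum>j<n. \<Sum>k<n. (if k = j then u j * cnj (u k) else 0)) + N / D^2 * (\<Sum>j<n. \<Sum>k<n. (u j * cnj (z j)) * (cnj (u k) * z k))"
      by (simp only: sum.distrib sum_distrib_left)
    also have "(\<Sum>j<n. \<Sum>k<n. (if k = j then u j * cnj (u k) else 0)) = (\<Sum>j<n. u j * cnj (u j))"
      by (intro sum.cong refl) (simp add: sum.delta)
    also have "(\<Sum>j<n. \<Sum>k<n. (u j * cnj (z j)) * (cnj (u k) * z k)) = (\<Sum>j<n. u j * cnj (z j)) * (\<Sum>k<n. cnj (u k) * z k)"
      by (simp add: sum_product)
    also have "N / D * (\<Sum>j<n. u j * cnj (u j)) + N / D^2 * ((\<Sum>j<n. u j * cnj (z j)) * (\<Sum>k<n. cnj (u k) * z k))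
       = of_nat (n+1) * ((\<Sum>j<n. u j * cnj (u j)) / D + (\<Sum>j<n. u j * cnj (z j)) * (\<Sum>k<n. cnj (u k) * z k) / D^2)"
      by (simp add: N_def algebra_simps)
    also have "(\<Sum>j<n. u j * cnj (u j)) = q"
      unfolding q_def normsq_def by (simp add: cns)
    also have "(\<Sum>j<n. u j * cnj (z j)) = of_real x * q"
      unfolding q_def normsq_def z_def by (simp add: cns sum_distrib_left algebra_simps)
    also have "(\<Sum>k<n. cnj (u k) * z k) = of_real x * q"
      unfolding q_def normsq_def z_def by (simp add: cns sum_distrib_left algebra_simps)
    also have "D = 1 - of_real x^2 * q" by (simp add: D_def nz q_def)
    finally have X: "(\<Sum>j<n. \<Sum>k<n. u j * cnj (u k) * bergman_coeff (K_ball n) j k z)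
       = of_nat (n+1) * (q / (1 - of_real x^2 * q) + of_real x * q * (of_real x * q) / (1 - of_real x^2 * q)^2)" .
    have D0': "1 - of_real x^2 * q \<noteq> 0" using D0 \<open>D = 1 - of_real x^2 * q\<close> by simp
    have "q / (1 - of_real x^2 * q) + of_real x * q * (of_real x * q) / (1 - of_real x^2 * q)^2 = q / (1 - of_real x^2 * q)^2"
      using frac_aux[OF D0', of q] by (simp add: algebra_simps power2_eq_square)
    thus ?thesis unfolding X by simp
  qed
  have "(\<Sum>j<n. \<Sum>k<n. u j * cnj (u k) * pullback_coeff m (bergman_coeff (K_IV m)) F j k z)
      = of_real c * (\<Sum>j<n. \<Sum>k<n. u j * cnj (u k) * bergman_coeff (K_ball n) j k z)"
    using iso zb' by (simp add: sum_distrib_left algebra_simps)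
  thus "of_nat m * (P * (R*cnj R)^2 - of_real x^2 * (sg * cnj sg) * (R * cnj R) + of_real x^4 * P * (sg * cnj sg) / 4)
          / ((R * cnj R)^2 * of_real (hIV m (\<lambda>a. of_real x * v a / R)))^2
        = of_real c * (of_nat (n+1) * (q / (1 - of_real x^2 * q)^2))"
    unfolding LHS RHS using pullback_contracted(2)[where v=v and R=R and x=x and m=m, OF R0] hpos
    by (simp add: T_def P_def sg_def)
qed

lemma poly_zero_near:
  fixes D :: "real poly"
  assumes e: "\<epsilon> > 0" and z: "\<And>x. \<bar>x\<bar> < \<epsilon> \<Longrightarrow> poly D x = 0"
  shows "D = 0"
proof (rule ccontr)
  assume "D \<noteq> 0"
  hence "finite {x. poly D x = 0}" by (rule poly_roots_finite)
  moreover have "{-\<epsilon><..<\<epsilon>} \<subseteq> {x. poly D x = 0}" using z by auto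
  ultimately have "finite {-\<epsilon><..<\<epsilon>}" by (rule finite_subset[rotated])
  thus False using e infinite_Ioo[of "-\<epsilon>" \<epsilon>] by simp
qed

lemma poly_step:
  fixes M C p q s b c \<epsilon> :: real
  assumes e: "\<epsilon> > 0"
    and eq: "\<And>x. \<bar>x\<bar> < \<epsilon> \<Longrightarrow>
      M * (p * (1 + b*x + c*x^2)^2 - x^2 * s * (1 + b*x + c*x^2) + x^4 * p * s / 4) * (1 - x^2 * q)^2
      = C * q * ((1 + b*x + c*x^2)^2 - x^2 * p * (1 + b*x + c*x^2) + x^4 * s / 4)^2"
  shows "M * p = C * q" "2 * M * p * b = 4 * C * q * b"
        "M * (p * (b^2 + 2*c) - s - 2*p*q) = C * q * (6*b^2 + 4*c - 2*p)"
proof -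
  define Wp where "Wp = [:1, b, c:]"
  define X2 where "X2 = [:0, 0, 1::real:]"
  define L where "L = smult M ((smult p (Wp*Wp) - smult s (X2*Wp) + smult (p* s/4) (X2*X2)) * ([:1, 0, -q:] * [:1, 0, -q:]))"
  define Np where "Np = Wp*Wp - smult p (X2 * Wp) + smult (s/4) (X2*X2)"
  define R where "R = smult (C*q) (Np * Np)"
  have "L - R = 0"
  proof (rule poly_zero_near[OF e])
    fix x :: real assume xe: "\<bar>x\<bar> < \<epsilon>"
    have e1: "poly L x = M * (p * (1 + b*x + c*x^2)^2 - x^2 * s * (1 + b*x + c*x^2) + x^4 * p * s / 4) * (1 - x^2 * q)^2"
      unfolding L_def Wp_def X2_def
      apply (simp only: poly_smult poly_mult poly_add poly_diff poly_pCons poly_0)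
      apply (simp add: power2_eq_square power4_eq_xxxx)
      apply (simp add: algebra_simps)
      done
    have e2: "poly R x = C * q * ((1 + b*x + c*x^2)^2 - x^2 * p * (1 + b*x + c*x^2) + x^4 * s / 4)^2"
      unfolding R_def Np_def Wp_def X2_def
      apply (simp only: poly_smult poly_mult poly_add poly_diff poly_pCons poly_0)
      apply (simp add: power2_eq_square power4_eq_xxxx)
      apply (simp add: algebra_simps)
      done
    show "poly (L - R) x = 0" unfolding poly_diff e1 e2 eq[OF xe] by simp
  qed
  hence LR: "L = R" by simp
  hence c: "coeff L i = coeff R i" for i by simp
  have cs: "coeff L 0 = M * p" "coeff L 1 = 2 * M * p * b" "coeff L 2 = M * (p * (b^2 + 2*c) - s - 2*p*q)"
      "coeff R 0 = C * q" "coeff R 1 = 4 * C * q * b" "coeff R 2 = C * q * (6*b^2 + 4*c - 2*p)"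
    unfolding L_def R_def Np_def Wp_def X2_def
    by (simp_all del: mult_pCons_left mult_pCons_right add: coeff_mult atMost_Suc numeral_2_eq_2)
  show "M * p = C * q" using c[of 0] cs by simp
  show "2 * M * p * b = 4 * C * q * b" using c[of 1] cs by simp
  show "M * (p * (b^2 + 2*c) - s - 2*p*q) = C * q * (6*b^2 + 4*c - 2*p)" using c[of 2] cs by simp
qed

lemma cmod_line_sq: "(cmod (1 + complex_of_real x * \<rho>))^2 = 1 + 2 * Re \<rho> * x + (cmod \<rho>)^2 * x^2"
proof -
  have a: "(cmod (1 + complex_of_real x * \<rho>))^2 = (1 + x * Re \<rho>)^2 + (x * Im \<rho>)^2"
    unfolding cmod_power2 by simp
  have b: "(cmod \<rho>)^2 = (Re \<rho>)^2 + (Im \<rho>)^2" by (rule cmod_power2)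
  show ?thesis unfolding a b by (simp add: power2_eq_square algebra_simps)
qed

lemma line_real:
  fixes u :: "nat \<Rightarrow> complex"
  assumes iso: "\<forall>z\<in>unit_ball n. \<forall>j<n. \<forall>k<n.
        pullback_coeff m (bergman_coeff (K_IV m)) F j k z = complex_of_real c * bergman_coeff (K_ball n) j k z"
    and img: "\<forall>z\<in>unit_ball n. F z \<in> typeIV m"
    and Feq: "\<forall>z\<in>unit_ball n. \<forall>a<m. (1 + linf n r z) * F z a = linf n (\<lambda>k. A k a) z"
    and u0: "\<forall>k\<ge>n. u k = 0"
  defines "\<rho> \<equiv> linf n r u"
  defines "v \<equiv> (\<lambda>a. linf n (\<lambda>k. A k a) u)"
  defines "p \<equiv> (\<Sum>a<m. (cmod (v a))^2)"
  defines "s \<equiv> (cmod (\<Sum>a<m. (v a)^2))^2"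
  defines "q \<equiv> normsq n u"
  shows "\<exists>\<epsilon>>0. \<forall>x. \<bar>x\<bar> < \<epsilon> \<longrightarrow>
      real m * (p * (1 + (2 * Re \<rho>) * x + (cmod \<rho>)^2 * x^2)^2 - x^2 * s * (1 + (2 * Re \<rho>) * x + (cmod \<rho>)^2 * x^2) + x^4 * p * s / 4) * (1 - x^2 * q)^2
      = (c * real (n+1)) * q * ((1 + (2 * Re \<rho>) * x + (cmod \<rho>)^2 * x^2)^2 - x^2 * p * (1 + (2 * Re \<rho>) * x + (cmod \<rho>)^2 * x^2) + x^4 * s / 4)^2"
proof -
  define \<epsilon> where "\<epsilon> = 1 / (1 + q + cmod \<rho>)"
  have q0: "q \<ge> 0" unfolding q_def normsq_def by (simp add: sum_nonneg)
  have ep: "\<epsilon> > 0" using q0 by (simp add: \<epsilon>_def add_pos_nonneg)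
  show ?thesis
  proof (intro exI[of _ \<epsilon>] conjI allI impI ep)
    fix x :: real assume xe: "\<bar>x\<bar> < \<epsilon>"
    have xb: "\<bar>x\<bar> * (1 + q + cmod \<rho>) < 1" using xe q0
      by (simp add: \<epsilon>_def field_simps add_pos_nonneg)
    have x1: "\<bar>x\<bar> < 1" using xb q0 by (smt (verit) mult_less_cancel_left2 norm_ge_zero)
    have xq: "x^2 * q < 1"
    proof -
      have "x^2 * q \<le> \<bar>x\<bar> * q" using x1 q0
        by (metis abs_ge_zero abs_mult_self_eq less_eq_real_def mult_left_le_one_le mult_right_mono power2_eq_square)
      also have "\<dots> \<le> \<bar>x\<bar> * (1 + q + cmod \<rho>)" by (simp add: mult_left_mono)
      finally show ?thesis using xb by linarith
    qed
    have xr: "\<bar>x\<bar> * cmod \<rho> < 1"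
    proof -
      have "\<bar>x\<bar> * cmod \<rho> \<le> \<bar>x\<bar> * (1 + q + cmod \<rho>)" using q0 by (simp add: mult_left_mono)
      thus ?thesis using xb by linarith
    qed
    define z where "z = (\<lambda>k. complex_of_real x * u k)"
    have zb: "z \<in> unit_ball n"
      unfolding unit_ball_def z_def using u0 xq normsq_scale[of n x u] by (simp add: q_def)
    define R where "R = 1 + complex_of_real x * \<rho>"
    have R0: "R \<noteq> 0"
    proof
      assume "R = 0"
      hence "complex_of_real x * \<rho> = -1" by (simp add: R_def add_eq_0_iff)
      hence "cmod (complex_of_real x * \<rho>) = 1" by simp
      thus False using xr by (simp add: norm_mult)
    qed
    note LI = line_identity[OF iso img Feq zb[unfolded z_def] R0[unfolded R_def \<rho>_def]]
    define T where "T = (\<lambda>a. of_real x * v a / R)"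
    define hr where "hr = hIV m T"
    have hpos: "hr > 0" using LI(2) by (simp add: hr_def T_def R_def v_def \<rho>_def)
    define wr where "wr = 1 + (2 * Re \<rho>) * x + (cmod \<rho>)^2 * x^2"
    have W: "R * cnj R = of_real wr"
    proof -
      have "R * cnj R = complex_of_real ((cmod R)^2)" by (rule complex_norm_square[symmetric])
      also have "(cmod R)^2 = wr" unfolding R_def wr_def by (rule cmod_line_sq)
      finally show ?thesis .
    qed
    have wpos: "wr > 0" using W R0 cmod_line_sq[of x \<rho>] unfolding wr_def R_def
      by (metis cmod_line_sq zero_less_norm_iff zero_less_power)
    have Pc: "(\<Sum>a<m. v a * cnj (v a)) = of_real p" unfolding p_def by (simp add: cns)
    have Sc: "(\<Sum>a<m. (v a)^2) * cnj (\<Sum>a<m. (v a)^2) = of_real s" unfolding s_def by (simp add: cns)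
    have hc: "complex_of_real hr = 1 - of_real x^2 * of_real p / of_real wr + of_real x^4 * of_real s / (4 * (of_real wr)^2)"
      using pullback_contracted(1)[where v=v and R=R and x=x and m=m, OF R0] hpos
      unfolding hr_def T_def W[symmetric] Pc Sc[symmetric] by (simp add: mult.assoc)
    define Nr where "Nr = wr^2 - x^2 * p * wr + x^4 * s / 4"
    have hN: "wr^2 * hr = Nr"
    proof -
      have "complex_of_real (wr^2 * hr) = of_real Nr"
        using wpos by (simp add: hc Nr_def field_simps power2_eq_square)
      thus ?thesis by (simp only: of_real_eq_iff)
    qed
    have Npos: "Nr > 0" using hN wpos hpos by (metis zero_less_mult_iff zero_less_power)
    have L1: "of_nat m * ((\<Sum>a<m. v a * cnj (v a)) * (R*cnj R)^2 - of_real x^2 * ((\<Sum>a<m. (v a)^2) * cnj (\<Sum>a<m. (v a)^2)) * (R * cnj R) + of_real x^4 * (\<Sum>a<m. v a * cnj (v a)) * ((\<Sum>a<m. (v a)^2) * cnj (\<Sum>a<m. (v a)^2)) / 4)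
          / ((R * cnj R)^2 * of_real (hIV m T))^2
        = of_real c * (of_nat (n+1) * (complex_of_real q / (1 - of_real x^2 * complex_of_real q)^2))"
      unfolding T_def v_def R_def \<rho>_def q_def by (rule LI(1))
    have hN': "(complex_of_real wr)^2 * complex_of_real hr = complex_of_real Nr"
      using hN by (metis of_real_mult of_real_power)
    have eqc: "complex_of_real (real m * (p * wr^2 - x^2 * s * wr + x^4 * p * s / 4) / Nr^2)
        = complex_of_real (c * (real (n+1) * (q / (1 - x^2 * q)^2)))"
      using L1 unfolding W Pc Sc hr_def[symmetric] hN' by simp
    hence eqr: "real m * (p * wr^2 - x^2 * s * wr + x^4 * p * s / 4) / Nr^2 = c * (real (n+1) * (q / (1 - x^2 * q)^2))"
      by (simp only: of_real_eq_iff)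
    have d0: "1 - x^2 * q \<noteq> 0" using xq by simp
    have "real m * (p * wr^2 - x^2 * s * wr + x^4 * p * s / 4) * (1 - x^2 * q)^2 = (c * real (n+1)) * q * Nr^2"
      using eqr Npos d0 by (simp add: field_simps)
    thus "real m * (p * (1 + (2 * Re \<rho>) * x + (cmod \<rho>)^2 * x^2)^2 - x^2 * s * (1 + (2 * Re \<rho>) * x + (cmod \<rho>)^2 * x^2) + x^4 * p * s / 4) * (1 - x^2 * q)^2
      = (c * real (n+1)) * q * ((1 + (2 * Re \<rho>) * x + (cmod \<rho>)^2 * x^2)^2 - x^2 * p * (1 + (2 * Re \<rho>) * x + (cmod \<rho>)^2 * x^2) + x^4 * s / 4)^2"
      unfolding wr_def Nr_def .
  qed
qed

lemma line_facts:
  fixes u :: "nat \<Rightarrow> complex"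
  assumes iso: "\<forall>z\<in>unit_ball n. \<forall>j<n. \<forall>k<n.
        pullback_coeff m (bergman_coeff (K_IV m)) F j k z = complex_of_real c * bergman_coeff (K_ball n) j k z"
    and img: "\<forall>z\<in>unit_ball n. F z \<in> typeIV m"
    and Feq: "\<forall>z\<in>unit_ball n. \<forall>a<m. (1 + linf n r z) * F z a = linf n (\<lambda>k. A k a) z"
    and u0: "\<forall>k\<ge>n. u k = 0" and c0: "c > 0" and m0: "m > 0"
  defines "\<rho> \<equiv> linf n r u"
  defines "v \<equiv> (\<lambda>a. linf n (\<lambda>k. A k a) u)"
  defines "p \<equiv> (\<Sum>a<m. (cmod (v a))^2)"
  defines "s \<equiv> (cmod (\<Sum>a<m. (v a)^2))^2"
  defines "q \<equiv> normsq n u"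
  shows "real m * p = c * real (n+1) * q"
    and "q > 0 \<Longrightarrow> Re \<rho> = 0"
    and "\<rho> = 0 \<Longrightarrow> s = 2 * p * (p - q)"
proof -
  obtain \<epsilon> where e: "\<epsilon> > 0" and eq: "\<And>x. \<bar>x\<bar> < \<epsilon> \<Longrightarrow>
      real m * (p * (1 + (2 * Re \<rho>) * x + (cmod \<rho>)^2 * x^2)^2 - x^2 * s * (1 + (2 * Re \<rho>) * x + (cmod \<rho>)^2 * x^2) + x^4 * p * s / 4) * (1 - x^2 * q)^2
      = (c * real (n+1)) * q * ((1 + (2 * Re \<rho>) * x + (cmod \<rho>)^2 * x^2)^2 - x^2 * p * (1 + (2 * Re \<rho>) * x + (cmod \<rho>)^2 * x^2) + x^4 * s / 4)^2"
    using line_real[OF iso img Feq u0] unfolding \<rho>_def v_def p_def s_def q_def by blast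
  note PS = poly_step[OF e eq]
  show A: "real m * p = c * real (n+1) * q" using PS(1) by simp
  show "Re \<rho> = 0" if q: "q > 0"
  proof -
    have "c * real (n+1) * q > 0" using q c0 by simp
    thus ?thesis using PS(2) PS(1) c0 q by auto
  qed
  show "s = 2 * p * (p - q)" if r: "\<rho> = 0"
  proof -
    have "real m * (p * 0 - s - 2*p*q) = c * real (n+1) * q * (0 - 2*p)" using PS(3) r by simp
    hence "real m * (- s - 2*p*q) = - 2 * p * (real m * p)" using A by (simp add: algebra_simps)
    hence "real m * s = real m * (2 * p * (p - q))" by (simp add: algebra_simps)
    thus ?thesis using m0 by simp
  qed
qed

definition vA :: "nat \<Rightarrow> (nat \<Rightarrow> nat \<Rightarrow> complex) \<Rightarrow> (nat \<Rightarrow> complex) \<Rightarrow> nat \<Rightarrow> complex" where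
  "vA n A u a = linf n (\<lambda>k. A k a) u"

definition u2 :: "nat \<Rightarrow> nat \<Rightarrow> complex \<Rightarrow> complex \<Rightarrow> nat \<Rightarrow> complex" where
  "u2 j k \<alpha> \<beta> = (\<lambda>i. if i = j then \<alpha> else if i = k then \<beta> else 0)"

lemma u2_zero: "j < n \<Longrightarrow> k < n \<Longrightarrow> \<forall>i\<ge>n. u2 j k \<alpha> \<beta> i = 0"
  by (simp add: u2_def)

lemma linf_u2: assumes "j < n" "k < n" "j \<noteq> k"
  shows "linf n f (u2 j k \<alpha> \<beta>) = \<alpha> * f j + \<beta> * f k"
proof -
  have "linf n f (u2 j k \<alpha> \<beta>) = (\<Sum>i<n. (if i = j then f j * \<alpha> else 0) + (if i = k then f k * \<beta> else 0))"
    unfolding linf_def u2_def using assms by (intro sum.cong refl) auto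
  also have "\<dots> = \<alpha> * f j + \<beta> * f k" using assms by (simp add: sum.distrib sum.delta mult.commute)
  finally show ?thesis .
qed

lemma normsq_u2: assumes "j < n" "k < n" "j \<noteq> k"
  shows "normsq n (u2 j k \<alpha> \<beta>) = (cmod \<alpha>)^2 + (cmod \<beta>)^2"
proof -
  have "normsq n (u2 j k \<alpha> \<beta>) = (\<Sum>i<n. (if i = j then (cmod \<alpha>)^2 else 0) + (if i = k then (cmod \<beta>)^2 else 0))"
    unfolding normsq_def u2_def using assms by (intro sum.cong refl) auto
  also have "\<dots> = (cmod \<alpha>)^2 + (cmod \<beta>)^2" using assms by (simp add: sum.distrib sum.delta)
  finally show ?thesis .
qed

definition ev :: "nat \<Rightarrow> complex \<Rightarrow> nat \<Rightarrow> complex" where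
  "ev k \<alpha> = (\<lambda>i. if i = k then \<alpha> else 0)"

lemma ev_zero: "k < n \<Longrightarrow> \<forall>i\<ge>n. ev k \<alpha> i = 0" by (simp add: ev_def)

lemma linf_ev: "k < n \<Longrightarrow> linf n f (ev k \<alpha>) = \<alpha> * f k"
  unfolding linf_def ev_def by (simp add: if_distrib sum.delta mult.commute cong: if_cong)

lemma normsq_ev: assumes "k < n" shows "normsq n (ev k \<alpha>) = (cmod \<alpha>)^2"
proof -
  have "normsq n (ev k \<alpha>) = (\<Sum>i<n. if i = k then (cmod \<alpha>)^2 else 0)"
    unfolding normsq_def ev_def by (intro sum.cong refl) auto
  thus ?thesis using assms by (simp add: sum.delta)
qed

lemma psum_c: "complex_of_real (\<Sum>a<m. (cmod (w a))^2) = (\<Sum>a<m. w a * cnj (w a))"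
  by (simp add: cns)

lemma algebra_part:
  fixes A :: "nat \<Rightarrow> nat \<Rightarrow> complex" and r :: "nat \<Rightarrow> complex" and \<kappa> :: real
  assumes n2: "n \<ge> 2" and kp: "\<kappa> > 0"
    and L1: "\<And>u. \<forall>k\<ge>n. u k = 0 \<Longrightarrow> (\<Sum>a<m. (cmod (vA n A u a))^2) = \<kappa> * normsq n u"
    and L2: "\<And>u. \<forall>k\<ge>n. u k = 0 \<Longrightarrow> normsq n u > 0 \<Longrightarrow> Re (linf n r u) = 0"
    and L3: "\<And>u. \<forall>k\<ge>n. u k = 0 \<Longrightarrow> linf n r u = 0 \<Longrightarrow>
        (cmod (\<Sum>a<m. (vA n A u a)^2))^2 = 2 * (\<Sum>a<m. (cmod (vA n A u a))^2) * ((\<Sum>a<m. (cmod (vA n A u a))^2) - normsq n u)"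
  shows "\<forall>k<n. r k = 0"
    and "\<forall>j<n. \<forall>k<n. (\<Sum>a<m. A j a * cnj (A k a)) = (if j = k then 1 else 0)"
    and "\<forall>j<n. \<forall>k<n. (\<Sum>a<m. A j a * A k a) = 0"
proof -
  show r0: "\<forall>k<n. r k = 0"
  proof (intro allI impI)
    fix k assume k: "k < n"
    have "Re (1 * r k) = 0" using L2[OF ev_zero[OF k], of 1] by (simp add: linf_ev[OF k] normsq_ev[OF k])
    moreover have "Re (\<i> * r k) = 0" using L2[OF ev_zero[OF k], of \<i>] by (simp add: linf_ev[OF k] normsq_ev[OF k])
    ultimately show "r k = 0" by (simp add: complex_eq_iff)
  qed
  have lr: "linf n r u = 0" for u unfolding linf_def using r0 by simp
  define p where "p = (\<lambda>u. \<Sum>a<m. (cmod (vA n A u a))^2)"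
  define sg where "sg = (\<lambda>u. \<Sum>a<m. (vA n A u a)^2)"
  have Lp: "p u = \<kappa> * normsq n u" if "\<forall>k\<ge>n. u k = 0" for u using L1[OF that] by (simp add: p_def)
  have Ls: "(cmod (sg u))^2 = 2 * \<kappa> * (\<kappa> - 1) * (normsq n u)^2" if u: "\<forall>k\<ge>n. u k = 0" for u
    using L3[OF u lr] Lp[OF u] by (simp add: p_def sg_def power2_eq_square algebra_simps)
  define S where "S = (\<lambda>j k. \<Sum>a<m. A j a * A k a)"
  have sg2: "sg (u2 j k \<alpha> \<beta>) = \<alpha>^2 * S j j + 2 * \<alpha> * \<beta> * S j k + \<beta>^2 * S k k"
    if jk: "j < n" "k < n" "j \<noteq> k" for j k \<alpha> \<beta>
  proof -
    have "sg (u2 j k \<alpha> \<beta>) = (\<Sum>a<m. \<alpha>^2 * (A j a * A j a) + 2 * \<alpha> * \<beta> * (A j a * A k a) + \<beta>^2 * (A k a * A k a))"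
      unfolding sg_def vA_def linf_u2[OF jk] by (intro sum.cong refl) (simp add: power2_eq_square algebra_simps)
    thus ?thesis unfolding S_def by (simp add: sum.distrib sum_distrib_left)
  qed
  have sgev: "sg (ev j \<alpha>) = \<alpha>^2 * S j j" if j: "j < n" for j \<alpha>
    unfolding sg_def vA_def linf_ev[OF j] S_def by (simp add: power2_eq_square sum_distrib_left algebra_simps)
  have n01: "0 < n" "1 < n" "(0::nat) \<noteq> 1" using n2 by auto
  obtain \<alpha> \<beta> where ab: "(cmod \<alpha>)^2 + (cmod \<beta>)^2 > 0" and nul: "\<alpha>^2 * S 0 0 + 2 * \<alpha> * \<beta> * S 0 1 + \<beta>^2 * S 1 1 = 0"
  proof (cases "S 0 0 = 0")
    case True
    thus ?thesis using that[of 1 0] by simp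
  next
    case False
    define D where "D = csqrt ((S 0 1)^2 - S 0 0 * S 1 1)"
    define \<alpha> where "\<alpha> = (- S 0 1 + D) / S 0 0"
    have "S 0 0 * (\<alpha>^2 * S 0 0 + 2 * \<alpha> * 1 * S 0 1 + 1^2 * S 1 1) = D^2 - (S 0 1)^2 + S 0 0 * S 1 1"
      unfolding \<alpha>_def using False by (simp add: field_simps power2_eq_square)
    also have "\<dots> = 0" unfolding D_def by simp
    finally have nul': "\<alpha>^2 * S 0 0 + 2 * \<alpha> * 1 * S 0 1 + 1^2 * S 1 1 = 0" using False by simp
    have ab': "(cmod \<alpha>)^2 + (cmod 1)^2 > 0" by (simp add: add_nonneg_pos)
    show ?thesis using that[OF ab' nul'] .
  qed
  have k1: "\<kappa> = 1"
  proof -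
    have u: "\<forall>i\<ge>n. u2 0 1 \<alpha> \<beta> i = 0" using u2_zero n01 by blast
    have "sg (u2 0 1 \<alpha> \<beta>) = 0" using sg2[OF n01] nul by simp
    hence "2 * \<kappa> * (\<kappa> - 1) * (normsq n (u2 0 1 \<alpha> \<beta>))^2 = 0" using Ls[OF u] by simp
    moreover have "normsq n (u2 0 1 \<alpha> \<beta>) > 0" using normsq_u2[OF n01] ab by simp
    ultimately show ?thesis using kp by simp
  qed
  have sg0: "sg u = 0" if u: "\<forall>k\<ge>n. u k = 0" for u using Ls[OF u] k1 by simp
  have pq: "p u = normsq n u" if u: "\<forall>k\<ge>n. u k = 0" for u using Lp[OF u] k1 by simp
  show "\<forall>j<n. \<forall>k<n. (\<Sum>a<m. A j a * A k a) = 0"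
  proof (intro allI impI)
    fix j k assume j: "j < n" and k: "k < n"
    have Sjj: "S i i = 0" if i: "i < n" for i using sg0[OF ev_zero[OF i], of 1] sgev[OF i, of 1] by simp
    show "(\<Sum>a<m. A j a * A k a) = 0"
    proof (cases "j = k")
      case True thus ?thesis using Sjj[OF j] by (simp add: S_def)
    next
      case False
      have "sg (u2 j k 1 1) = 0" using sg0 u2_zero[OF j k] by blast
      thus ?thesis using sg2[OF j k False, of 1 1] Sjj[OF j] Sjj[OF k] by (simp add: S_def)
    qed
  qed
  define G where "G = (\<lambda>j k. \<Sum>a<m. A j a * cnj (A k a))"
  have pc2: "complex_of_real (p (u2 j k \<alpha> \<beta>)) = \<alpha> * cnj \<alpha> * G j j + \<beta> * cnj \<beta> * G k k + \<alpha> * cnj \<beta> * G j k + \<beta> * cnj \<alpha> * G k j"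
    if jk: "j < n" "k < n" "j \<noteq> k" for j k \<alpha> \<beta>
  proof -
    have "complex_of_real (p (u2 j k \<alpha> \<beta>)) = (\<Sum>a<m. \<alpha> * cnj \<alpha> * (A j a * cnj (A j a)) + \<beta> * cnj \<beta> * (A k a * cnj (A k a))
        + \<alpha> * cnj \<beta> * (A j a * cnj (A k a)) + \<beta> * cnj \<alpha> * (A k a * cnj (A j a)))"
      unfolding p_def psum_c vA_def linf_u2[OF jk] by (intro sum.cong refl) (simp add: algebra_simps)
    thus ?thesis unfolding G_def by (simp add: sum.distrib sum_distrib_left)
  qed
  have pcev: "complex_of_real (p (ev j \<alpha>)) = \<alpha> * cnj \<alpha> * G j j" if j: "j < n" for j \<alpha>
    unfolding p_def psum_c vA_def linf_ev[OF j] G_def by (simp add: sum_distrib_left algebra_simps)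
  have Gjj: "G i i = 1" if i: "i < n" for i
    using pq[OF ev_zero[OF i], of 1] pcev[OF i, of 1] normsq_ev[OF i, of 1] by simp
  have Gc: "G k j = cnj (G j k)" for j k unfolding G_def by (simp add: cnj_sum mult.commute)
  show "\<forall>j<n. \<forall>k<n. (\<Sum>a<m. A j a * cnj (A k a)) = (if j = k then 1 else 0)"
  proof (intro allI impI)
    fix j k assume j: "j < n" and k: "k < n"
    show "(\<Sum>a<m. A j a * cnj (A k a)) = (if j = k then 1 else 0)"
    proof (cases "j = k")
      case True thus ?thesis using Gjj[OF j] by (simp add: G_def)
    next
      case False
      have e1: "complex_of_real (normsq n (u2 j k 1 1)) = 2" using normsq_u2[OF j k False, of 1 1] by simp
      have e2: "complex_of_real (normsq n (u2 j k 1 \<i>)) = 2" using normsq_u2[OF j k False, of 1 \<i>] by simp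
      have a1: "2 + G j k + cnj (G j k) = 2"
        using pc2[OF j k False, of 1 1] pq[OF u2_zero[OF j k], of 1 1] e1 Gjj[OF j] Gjj[OF k] Gc[of j k] by simp
      have a2: "2 - \<i> * G j k + \<i> * cnj (G j k) = 2"
        using pc2[OF j k False, of 1 \<i>] pq[OF u2_zero[OF j k], of 1 \<i>] e2 Gjj[OF j] Gjj[OF k] Gc[of j k] by simp
      have "G j k = 0" using a1 a2 by (simp add: complex_eq_iff)
      thus ?thesis using False by (simp add: G_def)
    qed
  qed
qed

lemma mpoly_support1:
  assumes "is_mpoly n c" "mpoly_deg n c \<le> 1" "c \<alpha> \<noteq> 0"
  shows "\<alpha> = (\<lambda>_. 0) \<or> (\<exists>k<n. \<alpha> = (\<lambda>i. if i = k then 1 else 0))"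
proof -
  define S where "S = {\<alpha>. c \<alpha> \<noteq> 0}"
  have finS: "finite S" using assms(1) by (simp add: is_mpoly_def S_def)
  have fin1: "finite {(\<Sum>k<n. \<alpha> k) | \<alpha>. c \<alpha> \<noteq> 0}"
  proof -
    have "{(\<Sum>k<n. \<alpha> k) | \<alpha>. c \<alpha> \<noteq> 0} = (\<lambda>\<alpha>. \<Sum>k<n. \<alpha> k) ` S" by (auto simp: S_def)
    thus ?thesis using finS by simp
  qed
  have sm: "(\<Sum>k<n. \<alpha> k) \<le> 1"
    using assms(2,3) fin1 unfolding mpoly_deg_def
    by (metis (mono_tags, lifting) Max_ge finite_insert insertCI mem_Collect_eq order_trans)
  have hi: "\<forall>k\<ge>n. \<alpha> k = 0" using assms(1,3) by (simp add: is_mpoly_def)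
  show ?thesis
  proof (cases "\<exists>k<n. \<alpha> k \<noteq> 0")
    case False
    hence "\<alpha> = (\<lambda>_. 0)" using hi by (metis not_le)
    thus ?thesis by simp
  next
    case True
    then obtain k where k: "k < n" "\<alpha> k \<noteq> 0" by blast
    have "\<alpha> k + (\<Sum>i\<in>{..<n}-{k}. \<alpha> i) \<le> 1"
      using sm k by (simp add: sum.remove)
    hence ak: "\<alpha> k = 1" and rest: "(\<Sum>i\<in>{..<n}-{k}. \<alpha> i) = 0" using k(2) by linarith+
    have "\<forall>i\<in>{..<n}-{k}. \<alpha> i = 0" using rest by simp
    hence "\<alpha> = (\<lambda>i. if i = k then 1 else 0)" using hi ak by (intro ext) (metis Diff_iff lessThan_iff not_le singletonD)
    thus ?thesis using k by blast
  qed
qed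

lemma cdiff_const_ray:
  assumes cd: "cdiff_at n f (\<lambda>_. 0)" and f0: "f (\<lambda>_. 0) = 0" and w0: "\<forall>k\<ge>n. w0 k = 0"
    and dp: "\<delta> > 0" and K: "\<And>t::real. 0 < t \<Longrightarrow> t < \<delta> \<Longrightarrow> f (\<lambda>k. of_real t * w0 k) = K"
  shows "K = 0"
proof (rule ccontr)
  assume Kn: "K \<noteq> 0"
  obtain a where A: "\<forall>e>0. \<exists>d>0. \<forall>w. (\<forall>k\<ge>n. w k = 0) \<and> sqrt (normsq n (\<lambda>k. w k - 0)) < d
        \<longrightarrow> cmod (f w - f (\<lambda>_. 0) - (\<Sum>k<n. a k * (w k - 0))) \<le> e * sqrt (normsq n (\<lambda>k. w k - 0))"
    using cd unfolding cdiff_at_def by blast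
  have A': "\<forall>e>0. \<exists>d>0. \<forall>w. (\<forall>k\<ge>n. w k = 0) \<and> sqrt (normsq n w) < d
        \<longrightarrow> cmod (f w - (\<Sum>k<n. a k * w k)) \<le> e * sqrt (normsq n w)"
    using A f0 by simp
  obtain d where d: "d > 0" and dd0: "\<forall>w. (\<forall>k\<ge>n. w k = 0) \<and> sqrt (normsq n w) < d
        \<longrightarrow> cmod (f w - (\<Sum>k<n. a k * w k)) \<le> 1 * sqrt (normsq n w)"
    using A'[rule_format, OF zero_less_one] by blast
  have dd: "\<And>w. (\<forall>k\<ge>n. w k = 0) \<Longrightarrow> sqrt (normsq n w) < d
        \<Longrightarrow> cmod (f w - (\<Sum>k<n. a k * w k)) \<le> sqrt (normsq n w)"
    using dd0 by simp
  define N0 where "N0 = sqrt (normsq n w0)"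
  define L where "L = (\<Sum>k<n. cmod (a k) * cmod (w0 k))"
  have N0p: "N0 \<ge> 0" unfolding N0_def normsq_def by (simp add: sum_nonneg)
  have Lp: "L \<ge> 0" unfolding L_def by (simp add: sum_nonneg)
  define t where "t = min (\<delta>/2) (min (d / (2 * (N0 + 1))) (cmod K / (2 * (L + N0 + 1))))"
  have tp: "t > 0" unfolding t_def using dp d Kn N0p Lp by (simp add: add_nonneg_pos)
  have td: "t < \<delta>" unfolding t_def using dp by linarith
  have tN: "t * N0 < d"
  proof -
    have "t \<le> d / (2 * (N0 + 1))" unfolding t_def by linarith
    hence "t * (N0 + 1) \<le> d / 2" using N0p by (simp add: field_simps)
    thus ?thesis using tp d by (simp add: algebra_simps)
  qed
  have tK: "t * (L + N0) < cmod K"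
  proof -
    have "t \<le> cmod K / (2 * (L + N0 + 1))" unfolding t_def by linarith
    hence "t * (L + N0 + 1) \<le> cmod K / 2" using N0p Lp by (simp add: field_simps)
    moreover have "t * (L + N0 + 1) = t * (L + N0) + t" by (simp add: algebra_simps)
    moreover have "t * (L + N0) \<ge> 0" using tp Lp N0p by simp
    ultimately show ?thesis using tp by linarith
  qed
  define w where "w = (\<lambda>k. complex_of_real t * w0 k)"
  have wz: "\<forall>k\<ge>n. w k = 0" using w0 by (simp add: w_def)
  have nw: "sqrt (normsq n w) = t * N0"
    unfolding w_def normsq_scale N0_def using tp by (simp add: real_sqrt_mult)
  have fw: "f w = K" using K[OF tp td] by (simp add: w_def)
  have le: "cmod (K - (\<Sum>k<n. a k * w k)) \<le> t * N0" using dd[OF wz] nw tN fw by simp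
  have ls: "cmod (\<Sum>k<n. a k * w k) \<le> t * L"
  proof -
    have "cmod (\<Sum>k<n. a k * w k) \<le> (\<Sum>k<n. cmod (a k * w k))" by (rule norm_sum)
    also have "\<dots> = t * L" unfolding L_def w_def using tp by (simp add: norm_mult sum_distrib_left algebra_simps)
    finally show ?thesis .
  qed
  have "cmod K \<le> cmod (K - (\<Sum>k<n. a k * w k)) + cmod (\<Sum>k<n. a k * w k)"
    by (metis diff_add_cancel norm_triangle_ineq)
  also have "\<dots> \<le> t * (L + N0)" using le ls by (simp add: algebra_simps)
  finally show False using tK by simp
qed

lemma dz_zero:
  assumes "\<delta> > 0" "\<And>\<zeta>. cmod \<zeta> < \<delta> \<Longrightarrow> f (z(j := z j + \<zeta>)) = 0"
  shows "dz j f z = 0"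
  by (rule wirtinger(1)[OF assms(1), where g="\<lambda>_ _. 0" and gb=0]) (use assms(2) in auto)

lemma zero_in_ball: "(\<lambda>_. 0) \<in> unit_ball n"
  by (simp add: unit_ball_def normsq_def)

lemma ray_in_ball:
  assumes "\<forall>k\<ge>n. w0 k = 0" "t^2 * normsq n w0 < 1"
  shows "(\<lambda>k. complex_of_real t * w0 k) \<in> unit_ball n"
  using assms normsq_scale[of n t w0] by (simp add: unit_ball_def)

lemma degenerate:
  fixes A :: "nat \<Rightarrow> nat \<Rightarrow> complex"
  assumes hol: "holomorphic_map n m (unit_ball n) F"
    and iso: "\<forall>z\<in>unit_ball n. \<forall>j<n. \<forall>k<n.
        pullback_coeff m (bergman_coeff (K_IV m)) F j k z = complex_of_real c * bergman_coeff (K_ball n) j k z"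
    and c0: "c > 0"
    and F0: "\<forall>j<m. F (\<lambda>_. 0) j = 0"
    and eq: "\<forall>z\<in>unit_ball n. \<forall>a<m. linf n r z * F z a = linf n (\<lambda>k. A k a) z"
    and k0: "k0 < n" and rk0: "r k0 \<noteq> 0"
  shows False
proof -
  have cd: "cdiff_at n (\<lambda>w. F w a) (\<lambda>_. 0)" if "a < m" for a
    using hol zero_in_ball that by (simp add: holomorphic_map_def)
  have Ak0: "A k0 a = 0" if a: "a < m" for a
  proof -
    have "A k0 a / r k0 = 0"
    proof (rule cdiff_const_ray[OF cd[OF a] _ ev_zero[OF k0, of 1]])
      show "F (\<lambda>_. 0) a = 0" using F0 a by simp
      show "(0::real) < 1" by simp
      fix t :: real assume t: "0 < t" "t < 1"
      have zb: "(\<lambda>k. complex_of_real t * ev k0 1 k) \<in> unit_ball n"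
        using t by (intro ray_in_ball ev_zero[OF k0]) (simp add: normsq_ev[OF k0] power_less_one_iff)
      have "linf n r (\<lambda>k. complex_of_real t * ev k0 1 k) * F (\<lambda>k. complex_of_real t * ev k0 1 k) a
          = linf n (\<lambda>k. A k a) (\<lambda>k. complex_of_real t * ev k0 1 k)" using eq zb a by blast
      hence "of_real t * r k0 * F (\<lambda>k. complex_of_real t * ev k0 1 k) a = of_real t * A k0 a"
        by (simp add: linf_scale linf_ev[OF k0])
      thus "F (\<lambda>k. complex_of_real t * ev k0 1 k) a = A k0 a / r k0"
        using t rk0 by (simp add: field_simps)
    qed
    thus ?thesis using rk0 by simp
  qed
  have Aall: "A l a = 0" if l: "l < n" and a: "a < m" for l a
  proof (cases "l = k0")
    case True thus ?thesis using Ak0 a by simp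
  next
    case False
    obtain lm :: complex where lam: "lm = 1 \<or> lm = 2" and rl: "r k0 + lm * r l \<noteq> 0"
    proof (cases "r k0 + r l = 0")
      case True
      hence "r l = - r k0" by (simp add: add_eq_0_iff)
      hence "r k0 + 2 * r l \<noteq> 0" using rk0 by simp
      thus ?thesis using that[of 2] by simp
    next
      case False thus ?thesis using that[of 1] by simp
    qed
    have lne: "lm \<noteq> 0" using lam by auto
    have nl: "normsq n (u2 k0 l 1 lm) \<le> 5" using normsq_u2[OF k0 l \<open>l \<noteq> k0\<close>[symmetric]] lam by auto
    have "lm * A l a / (r k0 + lm * r l) = 0"
    proof (rule cdiff_const_ray[OF cd[OF a] _ u2_zero[OF k0 l, of 1 lm]])
      show "F (\<lambda>_. 0) a = 0" using F0 a by simp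
      show "(0::real) < 1/3" by simp
      fix t :: real assume t: "0 < t" "t < 1/3"
      have "t^2 * normsq n (u2 k0 l 1 lm) \<le> t^2 * 5" using nl by (simp add: mult_left_mono)
      also have "\<dots> < 1"
      proof -
        have "t * t < (1/3) * (1/3)" using mult_strict_mono[of t "1/3" t "1/3"] t by simp
        thus ?thesis by (simp add: power2_eq_square)
      qed
      finally have zb: "(\<lambda>k. complex_of_real t * u2 k0 l 1 lm k) \<in> unit_ball n"
        by (intro ray_in_ball u2_zero[OF k0 l])
      have "linf n r (\<lambda>k. complex_of_real t * u2 k0 l 1 lm k) * F (\<lambda>k. complex_of_real t * u2 k0 l 1 lm k) a
          = linf n (\<lambda>k. A k a) (\<lambda>k. complex_of_real t * u2 k0 l 1 lm k)" using eq zb a by blast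
      hence "of_real t * (r k0 + lm * r l) * F (\<lambda>k. complex_of_real t * u2 k0 l 1 lm k) a = of_real t * (lm * A l a)"
        using Ak0[OF a] by (simp add: linf_scale linf_u2[OF k0 l \<open>l \<noteq> k0\<close>[symmetric]])
      hence "of_real t * ((r k0 + lm * r l) * F (\<lambda>k. complex_of_real t * u2 k0 l 1 lm k) a) = of_real t * (lm * A l a)"
        by (simp add: algebra_simps)
      hence "(r k0 + lm * r l) * F (\<lambda>k. complex_of_real t * u2 k0 l 1 lm k) a = lm * A l a"
        using t by simp
      thus "F (\<lambda>k. complex_of_real t * u2 k0 l 1 lm k) a = lm * A l a / (r k0 + lm * r l)"
        using rl by (simp add: field_simps)
    qed
    thus ?thesis using lne rl by simp
  qed
  have linA: "linf n (\<lambda>k. A k a) w = 0" if "a < m" for a w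
    unfolding linf_def using Aall that by simp
  define z1 where "z1 = ev k0 (1/2)"
  have S1: "normsq n z1 = 1/4" unfolding z1_def normsq_ev[OF k0] by (simp add: power2_eq_square)
  have z1b: "z1 \<in> unit_ball n" unfolding unit_ball_def using S1 ev_zero[OF k0] by (simp add: z1_def)
  have rz1: "linf n r z1 = r k0 / 2" unfolding z1_def linf_ev[OF k0] by simp
  have dz0: "dz j (\<lambda>w. F w a) z1 = 0" if j: "j < n" and a: "a < m" for j a
  proof -
    have "\<exists>\<delta>>0. \<forall>\<zeta>. cmod \<zeta> < \<delta> \<longrightarrow> min (1 - (normsq n z1 - (cmod (z1 j))^2 + (cmod (z1 j + \<zeta>))^2)) (cmod (linf n r z1 + r j * \<zeta>)) > 0"
      by (rule pos_near) (use S1 rz1 rk0 in \<open>auto intro!: continuous_intros\<close>)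
    then obtain \<delta> where dp: "\<delta> > 0" and dd: "\<And>\<zeta>. cmod \<zeta> < \<delta> \<Longrightarrow> min (1 - (normsq n z1 - (cmod (z1 j))^2 + (cmod (z1 j + \<zeta>))^2)) (cmod (linf n r z1 + r j * \<zeta>)) > 0"
      by blast
    show ?thesis
    proof (rule dz_zero[OF dp])
      fix \<zeta> :: complex assume zz: "cmod \<zeta> < \<delta>"
      have inb: "z1(j := z1 j + \<zeta>) \<in> unit_ball n"
        using dd[OF zz] normsq_upd_real[OF j, of z1 "z1 j + \<zeta>"] z1b j by (auto simp: unit_ball_def)
      have rne: "linf n r (z1(j := z1 j + \<zeta>)) \<noteq> 0" using dd[OF zz] by (simp add: linf_upd[OF j])
      have "linf n r (z1(j := z1 j + \<zeta>)) * F (z1(j := z1 j + \<zeta>)) a = 0"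
        using eq inb a linA[OF a] by metis
      thus "F (z1(j := z1 j + \<zeta>)) a = 0" using rne by simp
    qed
  qed
  have "pullback_coeff m (bergman_coeff (K_IV m)) F k0 k0 z1 = 0"
    unfolding pullback_coeff_def using dz0[OF k0] by simp
  hence "complex_of_real c * bergman_coeff (K_ball n) k0 k0 z1 = 0" using iso z1b k0 by metis
  moreover have "bergman_coeff (K_ball n) k0 k0 z1 \<noteq> 0"
  proof -
    have S1': "normsq n z1 < 1" using S1 by simp
    have z1k: "z1 k0 = 1/2" by (simp add: z1_def ev_def)
    have "bergman_coeff (K_ball n) k0 k0 z1 = of_nat (n+1) * (1 / (1 - of_real (1/4)) + (1/2) * cnj (1/2) / (1 - of_real (1/4))^2)"
      using bergman_ball[OF S1' k0 k0] unfolding S1 z1k by simp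
    also have "\<dots> = of_nat (n+1) * (4/3 + 4/9)" by (simp add: power2_eq_square)
    also have "\<dots> \<noteq> 0"
    proof (rule no_zero_divisors)
      show "(of_nat (n+1) :: complex) \<noteq> 0" by (simp only: of_nat_eq_0_iff)
      show "(4/3 + 4/9 :: complex) \<noteq> 0" by simp
    qed
    finally show ?thesis .
  qed
  ultimately show False using c0 by simp
qed

definition rows_on :: "nat \<Rightarrow> (nat \<Rightarrow> nat \<Rightarrow> real) \<Rightarrow> bool" where
  "rows_on m Q \<longleftrightarrow> (\<forall>i<m. \<forall>j<m. (\<Sum>l<m. Q i l * Q j l) = (if i = j then 1 else 0))"

definition orth2 :: "nat \<Rightarrow> (nat \<Rightarrow> nat \<Rightarrow> real) \<Rightarrow> bool" where
  "orth2 m Q \<longleftrightarrow> rows_on m Q \<and> orthogonal_mat m Q"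

lemma sum_delta_l: fixes i m :: nat assumes "i < m" shows "(\<Sum>j<m. (if i = j then 1 else 0) * f j) = (f i :: real)"
proof -
  have "(\<Sum>j<m. (if i = j then 1 else 0) * f j) = (\<Sum>j<m. if j = i then f j else 0)" by (rule sum.cong) auto
  thus ?thesis using assms by (simp add: sum.delta)
qed

lemma sum_delta_r: fixes i m :: nat assumes "i < m" shows "(\<Sum>j<m. f j * (if j = i then 1 else 0)) = (f i :: real)"
proof -
  have "(\<Sum>j<m. f j * (if j = i then 1 else 0)) = (\<Sum>j<m. if j = i then f j else 0)" by (rule sum.cong) auto
  thus ?thesis using assms by (simp add: sum.delta)
qed

lemma orth2_mult:
  assumes H: "orth2 m H" and Q: "orth2 m Q"
  shows "orth2 m (\<lambda>i l. \<Sum>j<m. H i j * Q j l)"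
proof -
  have Hr: "\<And>i i'. i < m \<Longrightarrow> i' < m \<Longrightarrow> (\<Sum>l<m. H i l * H i' l) = (if i = i' then 1 else 0)"
   and Hc: "\<And>i i'. i < m \<Longrightarrow> i' < m \<Longrightarrow> (\<Sum>k<m. H k i * H k i') = (if i = i' then 1 else 0)"
   and Qr: "\<And>i i'. i < m \<Longrightarrow> i' < m \<Longrightarrow> (\<Sum>l<m. Q i l * Q i' l) = (if i = i' then 1 else 0)"
   and Qc: "\<And>i i'. i < m \<Longrightarrow> i' < m \<Longrightarrow> (\<Sum>k<m. Q k i * Q k i') = (if i = i' then 1 else 0)"
    using H Q by (auto simp: orth2_def rows_on_def orthogonal_mat_def)
  have cols: "(\<Sum>i<m. (\<Sum>j<m. H i j * Q j l) * (\<Sum>j'<m. H i j' * Q j' l')) = (if l = l' then 1 else 0)"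
    if l: "l < m" "l' < m" for l l'
  proof -
    have "(\<Sum>i<m. (\<Sum>j<m. H i j * Q j l) * (\<Sum>j'<m. H i j' * Q j' l'))
        = (\<Sum>i<m. \<Sum>j<m. \<Sum>j'<m. (H i j * H i j') * (Q j l * Q j' l'))"
      unfolding sum_product by (intro sum.cong refl) (simp add: algebra_simps)
    also have "\<dots> = (\<Sum>j<m. \<Sum>i<m. \<Sum>j'<m. (H i j * H i j') * (Q j l * Q j' l'))"
      by (rule sum.swap)
    also have "\<dots> = (\<Sum>j<m. \<Sum>j'<m. \<Sum>i<m. (H i j * H i j') * (Q j l * Q j' l'))"
      by (rule sum.cong[OF refl]) (rule sum.swap)
    also have "\<dots> = (\<Sum>j<m. \<Sum>j'<m. (\<Sum>i<m. H i j * H i j') * (Q j l * Q j' l'))"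
      by (simp only: sum_distrib_right)
    also have "\<dots> = (\<Sum>j<m. \<Sum>j'<m. (if j = j' then 1 else 0) * (Q j l * Q j' l'))"
      by (intro sum.cong refl) (simp add: Hc)
    also have "\<dots> = (\<Sum>j<m. Q j l * Q j l')"
      by (intro sum.cong refl) (simp add: sum_delta_l)
    also have "\<dots> = (if l = l' then 1 else 0)" using Qc l by simp
    finally show ?thesis .
  qed
  have rows: "(\<Sum>l<m. (\<Sum>j<m. H i j * Q j l) * (\<Sum>j'<m. H i' j' * Q j' l)) = (if i = i' then 1 else 0)"
    if i: "i < m" "i' < m" for i i'
  proof -
    have "(\<Sum>l<m. (\<Sum>j<m. H i j * Q j l) * (\<Sum>j'<m. H i' j' * Q j' l))
        = (\<Sum>l<m. \<Sum>j<m. \<Sum>j'<m. (H i j * H i' j') * (Q j l * Q j' l))"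
      unfolding sum_product by (intro sum.cong refl) (simp add: algebra_simps)
    also have "\<dots> = (\<Sum>j<m. \<Sum>l<m. \<Sum>j'<m. (H i j * H i' j') * (Q j l * Q j' l))"
      by (rule sum.swap)
    also have "\<dots> = (\<Sum>j<m. \<Sum>j'<m. \<Sum>l<m. (H i j * H i' j') * (Q j l * Q j' l))"
      by (rule sum.cong[OF refl]) (rule sum.swap)
    also have "\<dots> = (\<Sum>j<m. \<Sum>j'<m. (H i j * H i' j') * (\<Sum>l<m. Q j l * Q j' l))"
      by (simp only: sum_distrib_left)
    also have "\<dots> = (\<Sum>j<m. \<Sum>j'<m. (H i j * H i' j') * (if j = j' then 1 else 0))"
      by (intro sum.cong refl) (simp add: Qr)
    also have "\<dots> = (\<Sum>j<m. H i j * H i' j)"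
    proof (intro sum.cong refl)
      fix j assume j: "j \<in> {..<m}"
      have "(\<Sum>j'<m. (H i j * H i' j') * (if j = j' then 1 else 0)) = (\<Sum>j'<m. if j' = j then H i j * H i' j' else 0)"
        by (rule sum.cong) auto
      also have "\<dots> = H i j * H i' j" using j by simp
      finally show "(\<Sum>j'<m. (H i j * H i' j') * (if j = j' then 1 else 0)) = H i j * H i' j" .
    qed
    also have "\<dots> = (if i = i' then 1 else 0)" using Hr i by simp
    finally show ?thesis .
  qed
  show ?thesis unfolding orth2_def rows_on_def orthogonal_mat_def using rows cols by auto
qed

lemma householder:
  fixes w :: "nat \<Rightarrow> real"
  assumes nw: "(\<Sum>j<m. (w j)^2) \<noteq> 0"
  shows "orth2 m (\<lambda>i j. (if i = j then 1 else 0) - 2 * w i * w j / (\<Sum>j<m. (w j)^2))"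
proof -
  define N where "N = (\<Sum>j<m. (w j)^2)"
  have key: "(\<Sum>j<m. ((if i = j then 1 else 0) - 2 * w i * w j / N) * ((if l = j then 1 else 0) - 2 * w l * w j / N))
      = (if i = l then 1 else 0)" if il: "i < m" "l < m" for i l
  proof -
    have "(\<Sum>j<m. ((if i = j then 1 else 0) - 2 * w i * w j / N) * ((if l = j then 1 else 0) - 2 * w l * w j / N))
       = (\<Sum>j<m. (if i = j then 1 else 0) * (if l = j then 1 else 0) - (2 * w l / N) * ((if i = j then 1 else 0) * w j)
           - (2 * w i / N) * ((if l = j then 1 else 0) * w j) + (4 * w i * w l / N^2) * (w j)^2)"
      by (intro sum.cong refl) (simp add: algebra_simps power2_eq_square)
    also have "\<dots> = (\<Sum>j<m. (if i = j then 1 else 0) * (if l = j then 1 else 0)) - (2 * w l / N) * (\<Sum>j<m. (if i = j then 1 else 0) * w j)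
           - (2 * w i / N) * (\<Sum>j<m. (if l = j then 1 else 0) * w j) + (4 * w i * w l / N^2) * (\<Sum>j<m. (w j)^2)"
      by (simp only: sum.distrib sum_subtractf sum_distrib_left)
    also have "\<dots> = (if i = l then 1 else 0) - 2 * w l * w i / N - 2 * w i * w l / N + 4 * w i * w l / N"
      using il nw by (simp add: sum_delta_l N_def power2_eq_square)
    also have "\<dots> = (if i = l then 1 else 0)" by (simp add: algebra_simps)
    finally show ?thesis .
  qed
  define Hf where "Hf = (\<lambda>i j. (if i = j then 1 else 0) - 2 * w i * w j / N)"
  have Hs: "Hf i j = Hf j i" for i j by (cases "i = j") (auto simp: Hf_def algebra_simps)
  have rows: "(\<Sum>l<m. Hf i l * Hf j l) = (if i = j then 1 else 0)" if "i < m" "j < m" for i j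
    using key[OF that] by (simp add: Hf_def)
  have cols: "(\<Sum>k<m. Hf k i * Hf k j) = (if i = j then 1 else 0)" if "i < m" "j < m" for i j
  proof -
    have "(\<Sum>k<m. Hf k i * Hf k j) = (\<Sum>k<m. Hf i k * Hf j k)" by (intro sum.cong refl) (metis Hs)
    thus ?thesis using rows[OF that] by simp
  qed
  have "orth2 m Hf" unfolding orth2_def rows_on_def orthogonal_mat_def using rows cols by blast
  thus ?thesis unfolding Hf_def N_def .
qed

lemma orth2_id: "orth2 m (\<lambda>i j. if i = j then 1 else 0)"
proof -
  have r: "(\<Sum>l<m. (if i = l then 1 else 0) * (if j = l then 1 else (0::real))) = (if i = j then 1 else 0)"
    if "i < m" for i j
    using sum_delta_l[OF that, of "\<lambda>l. if j = l then 1 else (0::real)"] by simp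
  have c: "(\<Sum>l<m. (if l = i then 1 else 0) * (if l = j then 1 else (0::real))) = (if i = j then 1 else 0)"
    if "i < m" for i j
  proof -
    have "(\<Sum>l<m. (if l = i then 1 else 0) * (if l = j then 1 else (0::real))) = (\<Sum>l<m. (if i = l then 1 else 0) * (if j = l then 1 else (0::real)))"
      by (intro sum.cong refl) auto
    thus ?thesis using r[OF that] by simp
  qed
  show ?thesis unfolding orth2_def rows_on_def orthogonal_mat_def using r c by auto
qed

lemma extend_orth:
  fixes V :: "nat \<Rightarrow> nat \<Rightarrow> real"
  assumes "k \<le> m" and "\<forall>i<k. \<forall>j<k. (\<Sum>l<m. V i l * V j l) = (if i = j then 1 else 0)"
  shows "\<exists>Q. orth2 m Q \<and> (\<forall>i<k. \<forall>l<m. Q i l = V i l)"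
  using assms
proof (induction k)
  case 0
  thus ?case using orth2_id by blast
next
  case (Suc k)
  have km: "k < m" using Suc.prems(1) by simp
  have V: "\<And>i j. i < Suc k \<Longrightarrow> j < Suc k \<Longrightarrow> (\<Sum>l<m. V i l * V j l) = (if i = j then 1 else 0)"
    using Suc.prems(2) by blast
  obtain Q where Q: "orth2 m Q" and QV: "\<forall>i<k. \<forall>l<m. Q i l = V i l"
    using Suc.IH Suc.prems by auto
  have Qc: "\<And>l l'. l < m \<Longrightarrow> l' < m \<Longrightarrow> (\<Sum>i<m. Q i l * Q i l') = (if l = l' then 1 else 0)"
    using Q by (auto simp: orth2_def orthogonal_mat_def)
  define y where "y = (\<lambda>i. \<Sum>l<m. V k l * Q i l)"
  have y2: "(\<Sum>i<m. y i * Q i l) = V k l" if l: "l < m" for l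
  proof -
    have "(\<Sum>i<m. y i * Q i l) = (\<Sum>i<m. \<Sum>l'<m. V k l' * (Q i l' * Q i l))"
      unfolding y_def by (simp add: sum_distrib_right mult.assoc)
    also have "\<dots> = (\<Sum>l'<m. \<Sum>i<m. V k l' * (Q i l' * Q i l))" by (rule sum.swap)
    also have "\<dots> = (\<Sum>l'<m. V k l' * (if l' = l then 1 else 0))"
      by (intro sum.cong refl) (simp add: sum_distrib_left[symmetric] Qc l)
    also have "\<dots> = V k l" using sum_delta_r[OF l] by simp
    finally show ?thesis .
  qed
  have y1: "y i = 0" if i: "i < k" for i
  proof -
    have "y i = (\<Sum>l<m. V k l * V i l)" unfolding y_def using QV i by (intro sum.cong refl) auto
    also have "\<dots> = 0" using V[of k i] i by simp
    finally show ?thesis .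
  qed
  have y3: "(\<Sum>i<m. (y i)^2) = 1"
  proof -
    have "(\<Sum>i<m. (y i)^2) = (\<Sum>i<m. \<Sum>l<m. V k l * (y i * Q i l))"
      unfolding power2_eq_square by (simp add: y_def sum_distrib_left sum_distrib_right algebra_simps)
    also have "\<dots> = (\<Sum>l<m. \<Sum>i<m. V k l * (y i * Q i l))" by (rule sum.swap)
    also have "\<dots> = (\<Sum>l<m. V k l * V k l)" by (intro sum.cong refl) (simp add: sum_distrib_left[symmetric] y2)
    also have "\<dots> = 1" using V[of k k] by simp
    finally show ?thesis .
  qed
  define w where "w = (\<lambda>i. (if i = k then 1 else 0) - y i)"
  have nw: "(\<Sum>i<m. (w i)^2) = 2 - 2 * y k"
  proof -
    have "(\<Sum>i<m. (w i)^2) = (\<Sum>i<m. (if i = k then 1 else 0) - 2 * ((if k = i then 1 else 0) * y i) + (y i)^2)"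
      unfolding w_def by (intro sum.cong refl) (auto simp: power2_eq_square algebra_simps)
    also have "\<dots> = (\<Sum>i<m. (if i = k then 1 else 0)) - 2 * (\<Sum>i<m. (if k = i then 1 else 0) * y i) + (\<Sum>i<m. (y i)^2)"
      by (simp only: sum.distrib sum_subtractf sum_distrib_left)
    also have "\<dots> = 2 - 2 * y k" using km y3 sum_delta_l[OF km, of y] by simp
    finally show ?thesis .
  qed
  show ?case
  proof (cases "y k = 1")
    case True
    hence "(\<Sum>i<m. (w i)^2) = 0" using nw by simp
    hence "\<forall>i\<in>{..<m}. (w i)^2 = 0" by (subst sum_nonneg_eq_0_iff[symmetric]) auto
    hence yd: "y i = (if i = k then 1 else 0)" if "i < m" for i using that by (auto simp: w_def)
    have "\<forall>i<Suc k. \<forall>l<m. Q i l = V i l"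
    proof (intro allI impI)
      fix i l assume i: "i < Suc k" and l: "l < m"
      show "Q i l = V i l"
      proof (cases "i = k")
        case True
        have "V k l = (\<Sum>j<m. (if k = j then 1 else 0) * Q j l)" unfolding y2[OF l, symmetric]
          by (intro sum.cong refl) (simp add: yd eq_commute)
        also have "\<dots> = Q k l" using sum_delta_l[OF km] by simp
        finally show ?thesis using True by simp
      next
        case False thus ?thesis using QV i l by simp
      qed
    qed
    thus ?thesis using Q by blast
  next
    case False
    define N where "N = (\<Sum>i<m. (w i)^2)"
    have N0: "N \<noteq> 0" using nw False by (simp add: N_def)
    define H where "H = (\<lambda>i j. (if i = j then 1 else 0) - 2 * w i * w j / N)"
    have H: "orth2 m H" unfolding H_def N_def using householder[where m=m and w=w] N0 by (simp add: N_def)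
    define Q' where "Q' = (\<lambda>i l. \<Sum>j<m. H i j * Q j l)"
    have Q': "orth2 m Q'" unfolding Q'_def by (rule orth2_mult[OF H Q])
    have "\<forall>i<Suc k. \<forall>l<m. Q' i l = V i l"
    proof (intro allI impI)
      fix i l assume i: "i < Suc k" and l: "l < m"
      show "Q' i l = V i l"
      proof (cases "i = k")
        case True
        have Hk: "H k j = y j" for j
        proof -
          have "N = 2 * (1 - y k)" using nw by (simp add: N_def)
          hence "2 * w k * w j / N = w j" using False by (simp add: w_def)
          thus ?thesis by (simp add: H_def w_def)
        qed
        show ?thesis using True y2[OF l] by (simp add: Q'_def Hk)
      next
        case False
        hence ik: "i < k" using i by simp
        have wi: "w i = 0" using y1[OF ik] ik by (simp add: w_def)
        have "Q' i l = (\<Sum>j<m. (if i = j then 1 else 0) * Q j l)" unfolding Q'_def H_def wi by simp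
        also have "\<dots> = Q i l" using sum_delta_l ik km by simp
        also have "\<dots> = V i l" using QV ik l by simp
        finally show ?thesis .
      qed
    qed
    thus ?thesis using Q' by blast
  qed
qed

lemma mpoly_deg1:
  assumes "is_mpoly n c" "mpoly_deg n c \<le> 1"
  shows "mpoly_eval n c z = c (\<lambda>_. 0) + (\<Sum>k<n. c (\<lambda>i. if i = k then 1 else 0) * z k)"
proof -
  define S where "S = {\<alpha>. c \<alpha> \<noteq> 0}"
  define e where "e = (\<lambda>k::nat. \<lambda>i::nat. if i = k then 1::nat else 0)"
  define E where "E = insert (\<lambda>_. 0) (e ` {..<n})"
  have finS: "finite S" using assms(1) by (simp add: is_mpoly_def S_def)
  have fin1: "finite {(\<Sum>k<n. \<alpha> k) | \<alpha>. c \<alpha> \<noteq> 0}"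
  proof -
    have "{(\<Sum>k<n. \<alpha> k) | \<alpha>. c \<alpha> \<noteq> 0} = (\<lambda>\<alpha>. \<Sum>k<n. \<alpha> k) ` S" by (auto simp: S_def)
    thus ?thesis using finS by simp
  qed
  have SE: "S \<subseteq> E"
  proof
    fix \<alpha> assume a: "\<alpha> \<in> S"
    hence sm: "(\<Sum>k<n. \<alpha> k) \<le> 1"
      using assms(2) fin1 unfolding mpoly_deg_def S_def
      by (metis (mono_tags, lifting) Max_ge finite_insert insertCI mem_Collect_eq order_trans)
    have hi: "\<forall>k\<ge>n. \<alpha> k = 0" using a assms(1) by (simp add: is_mpoly_def S_def)
    show "\<alpha> \<in> E"
    proof (cases "\<exists>k<n. \<alpha> k \<noteq> 0")
      case False
      hence "\<alpha> = (\<lambda>_. 0)" using hi by (metis not_le ext)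
      thus ?thesis by (simp add: E_def)
    next
      case True
      then obtain k where k: "k < n" "\<alpha> k \<noteq> 0" by blast
      have "\<alpha> k + (\<Sum>i\<in>{..<n}-{k}. \<alpha> i) \<le> 1"
        using sm k by (simp add: sum.remove)
      hence ak: "\<alpha> k = 1" and rest: "(\<Sum>i\<in>{..<n}-{k}. \<alpha> i) = 0" using k(2) by linarith+
      have "\<forall>i\<in>{..<n}-{k}. \<alpha> i = 0" using rest by simp
      hence "\<alpha> = e k" using hi ak unfolding e_def by (intro ext) (metis Diff_iff lessThan_iff not_le singletonD)
      thus ?thesis using k by (simp add: E_def)
    qed
  qed
  have finE: "finite E" by (simp add: E_def)
  have "mpoly_eval n c z = (\<Sum>\<alpha>\<in>E. c \<alpha> * (\<Prod>k<n. z k ^ \<alpha> k))"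
    unfolding mpoly_eval_def S_def[symmetric]
    by (rule sum.mono_neutral_left[OF finE SE]) (auto simp: S_def)
  also have "\<dots> = c (\<lambda>_. 0) + (\<Sum>\<alpha>\<in>e ` {..<n}. c \<alpha> * (\<Prod>k<n. z k ^ \<alpha> k))"
  proof -
    have "(\<lambda>_. 0) \<notin> e ` {..<n}"
    proof
      assume "(\<lambda>_. 0) \<in> e ` {..<n}"
      then obtain k where "(\<lambda>_. 0) = e k" by auto
      hence "(0::nat) = e k k" by (metis)
      thus False by (simp add: e_def)
    qed
    thus ?thesis unfolding E_def by (simp add: sum.insert)
  qed
  also have "(\<Sum>\<alpha>\<in>e ` {..<n}. c \<alpha> * (\<Prod>k<n. z k ^ \<alpha> k)) = (\<Sum>k<n. c (e k) * (\<Prod>i<n. z i ^ e k i))"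
    by (rule sum.reindex_cong[where l=e]) (auto simp: inj_on_def e_def fun_eq_iff)
  also have "\<dots> = (\<Sum>k<n. c (e k) * z k)"
  proof (rule sum.cong[OF refl])
    fix k assume "k \<in> {..<n}"
    hence "(\<Prod>i<n. z i ^ e k i) = (\<Prod>i\<in>{k}. z i ^ e k i)"
      by (intro prod.mono_neutral_right) (auto simp: e_def)
    thus "c (e k) * (\<Prod>i<n. z i ^ e k i) = c (e k) * z k" by (simp add: e_def)
  qed
  finally show ?thesis by (simp add: e_def)
qed

lemma sum_pairs: fixes n :: nat and f :: "nat \<Rightarrow> 'a::comm_monoid_add"
  shows "(\<Sum>i<2*n. f i) = (\<Sum>k<n. f (2*k) + f (2*k+1))"
  by (induction n) (simp_all add: algebra_simps)

lemma ortho_real: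
  fixes A :: "nat \<Rightarrow> nat \<Rightarrow> complex"
  assumes G: "(\<Sum>l<m. A j l * cnj (A k l)) = (if j = k then 1 else 0)"
    and S: "(\<Sum>l<m. A j l * A k l) = 0"
  shows "(\<Sum>l<m. (sqrt 2 * Re (A j l)) * (sqrt 2 * Re (A k l))) = (if j = k then 1 else 0)"
    and "(\<Sum>l<m. (sqrt 2 * Im (A j l)) * (sqrt 2 * Im (A k l))) = (if j = k then 1 else 0)"
    and "(\<Sum>l<m. (sqrt 2 * Re (A j l)) * (sqrt 2 * Im (A k l))) = 0"
proof -
  define a where "a = (\<Sum>l<m. Re (A j l) * Re (A k l))"
  define b where "b = (\<Sum>l<m. Im (A j l) * Im (A k l))"
  define c where "c = (\<Sum>l<m. Re (A j l) * Im (A k l))"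
  define d where "d = (\<Sum>l<m. Im (A j l) * Re (A k l))"
  have g1: "a + b = (if j = k then 1 else 0)"
    using arg_cong[OF G, of Re] by (simp add: Re_sum a_def b_def sum.distrib)
  have s1: "a - b = 0"
    using arg_cong[OF S, of Re] by (simp add: Re_sum a_def b_def sum_subtractf)
  have g2: "d - c = 0"
    using arg_cong[OF G, of Im] by (simp add: Im_sum c_def d_def sum_subtractf)
  have s2: "c + d = 0"
    using arg_cong[OF S, of Im] by (simp add: Im_sum c_def d_def sum.distrib)
  have e: "\<And>f g. (\<Sum>l<m. (sqrt 2 * f l) * (sqrt 2 * g l)) = 2 * (\<Sum>l<m. f l * g l :: real)"
    by (simp add: sum_distrib_left algebra_simps)
  show "(\<Sum>l<m. (sqrt 2 * Re (A j l)) * (sqrt 2 * Re (A k l))) = (if j = k then 1 else 0)"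
    unfolding e a_def[symmetric] using g1 s1 by (auto simp: algebra_simps)
  show "(\<Sum>l<m. (sqrt 2 * Im (A j l)) * (sqrt 2 * Im (A k l))) = (if j = k then 1 else 0)"
    unfolding e b_def[symmetric] using g1 s1 by (auto simp: algebra_simps)
  show "(\<Sum>l<m. (sqrt 2 * Re (A j l)) * (sqrt 2 * Im (A k l))) = 0"
    unfolding e c_def[symmetric] using g2 s2 by simp
qed

theorem mainTheorem10:
  fixes n m :: nat and F :: "(nat \<Rightarrow> complex) \<Rightarrow> (nat \<Rightarrow> complex)"
  assumes "n \<ge> 2" and "m \<ge> 2 * n"
    and "holo_isometry n m F"
    and "is_rational_map n m F"
    and "\<forall>j<m. F (\<lambda>_. 0) j = 0"
    and "rat_deg n m F = 1"
  shows "\<exists>Q. orthogonal_mat m Q \<and>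
           (\<forall>z\<in>unit_ball n. \<forall>j<m. F z j = (\<Sum>i<m. model_vec n z i * complex_of_real (Q i j)))"
proof -
  note n2 = assms(1) and m2 = assms(2) and F0 = assms(5)
  have m0: "m > 0" using n2 m2 by simp
  obtain c where c0: "c > 0" and iso: "\<forall>z\<in>unit_ball n. \<forall>j<n. \<forall>k<n.
        pullback_coeff m (bergman_coeff (K_IV m)) F j k z = complex_of_real c * bergman_coeff (K_ball n) j k z"
    using assms(3) unfolding holo_isometry_def by blast
  have img: "\<forall>z\<in>unit_ball n. F z \<in> typeIV m" and hol: "holomorphic_map n m (unit_ball n) F"
    using assms(3) unfolding holo_isometry_def by blast+
  have rr: "rational_rep n m F 1"
  proof -
    obtain d where "rational_rep n m F d" using assms(4) unfolding is_rational_map_def by blast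
    hence "rational_rep n m F (LEAST d. rational_rep n m F d)" by (rule LeastI)
    thus ?thesis using assms(6) unfolding rat_deg_def by simp
  qed
  then obtain P R where isR: "is_mpoly n R" and Rne: "\<exists>\<alpha>. R \<alpha> \<noteq> 0" and dR: "mpoly_deg n R \<le> 1"
      and Ps: "\<forall>j<m. is_mpoly n (P j) \<and> mpoly_deg n (P j) \<le> 1"
      and eqr: "\<forall>z\<in>unit_ball n. \<forall>j<m. mpoly_eval n R z * F z j = mpoly_eval n (P j) z"
    unfolding rational_rep_def by blast
  define e where "e = (\<lambda>k::nat. \<lambda>i::nat. if i = k then 1::nat else 0)"
  define R0 where "R0 = R (\<lambda>_. 0)"
  define r' where "r' = (\<lambda>k. R (e k))"
  define A' where "A' = (\<lambda>k j. P j (e k))"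
  have evR: "mpoly_eval n R z = R0 + linf n r' z" for z
    unfolding R0_def r'_def linf_def e_def by (rule mpoly_deg1[OF isR dR])
  have evP: "mpoly_eval n (P j) z = P j (\<lambda>_. 0) + linf n (\<lambda>k. A' k j) z" if "j < m" for j z
  proof -
    have "is_mpoly n (P j)" "mpoly_deg n (P j) \<le> 1" using Ps that by auto
    thus ?thesis unfolding A'_def linf_def e_def by (rule mpoly_deg1)
  qed
  have P00: "P j (\<lambda>_. 0) = 0" if j: "j < m" for j
  proof -
    have "mpoly_eval n R (\<lambda>_. 0) * F (\<lambda>_. 0) j = mpoly_eval n (P j) (\<lambda>_. 0)"
      using eqr zero_in_ball j by blast
    thus ?thesis using F0 j evP[OF j, of "\<lambda>_. 0"] by (simp add: linf_def)
  qed
  have eq': "(R0 + linf n r' z) * F z a = linf n (\<lambda>k. A' k a) z" if "z \<in> unit_ball n" "a < m" for z a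
  proof -
    have "mpoly_eval n R z * F z a = mpoly_eval n (P a) z" using eqr that by blast
    thus ?thesis unfolding evR evP[OF that(2)] P00[OF that(2)] by simp
  qed
  have R0ne: "R0 \<noteq> 0"
  proof
    assume R00: "R0 = 0"
    obtain \<alpha> where a: "R \<alpha> \<noteq> 0" using Rne by blast
    from mpoly_support1[OF isR dR a] obtain k where k: "k < n" "\<alpha> = e k"
      using a R00 unfolding R0_def e_def by blast
    have rk: "r' k \<noteq> 0" using a k by (simp add: r'_def)
    have eqd: "\<forall>z\<in>unit_ball n. \<forall>a<m. linf n r' z * F z a = linf n (\<lambda>k. A' k a) z"
      using eq' R00 by simp
    show False by (rule degenerate[OF hol iso c0 F0 eqd k(1) rk])
  qed
  define r where "r = (\<lambda>k. r' k / R0)"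
  define A where "A = (\<lambda>k a. A' k a / R0)"
  have ldiv: "linf n (\<lambda>k. f k / R0) z = linf n f z / R0" for f z
    unfolding linf_def by (simp add: sum_divide_distrib)
  have Feq: "\<forall>z\<in>unit_ball n. \<forall>a<m. (1 + linf n r z) * F z a = linf n (\<lambda>k. A k a) z"
  proof (intro ballI allI impI)
    fix z a assume z: "z \<in> unit_ball n" and a: "a < m"
    have "(R0 + linf n r' z) * F z a = linf n (\<lambda>k. A' k a) z" by (rule eq'[OF z a])
    hence "((R0 + linf n r' z) * F z a) / R0 = linf n (\<lambda>k. A' k a) z / R0" by simp
    thus "(1 + linf n r z) * F z a = linf n (\<lambda>k. A k a) z"
      unfolding r_def A_def ldiv using R0ne by (simp add: field_simps)
  qed
  define \<kappa> where "\<kappa> = c * real (n+1) / real m"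
  have kp: "\<kappa> > 0" using c0 m0 by (simp add: \<kappa>_def)
  note LF = line_facts[OF iso img Feq _ c0 m0]
  have L1: "(\<Sum>a<m. (cmod (vA n A u a))^2) = \<kappa> * normsq n u" if u: "\<forall>k\<ge>n. u k = 0" for u
    using LF(1)[OF u] m0 unfolding vA_def \<kappa>_def by (simp add: field_simps)
  have L2: "normsq n u > 0 \<Longrightarrow> Re (linf n r u) = 0" if u: "\<forall>k\<ge>n. u k = 0" for u
    using LF(2)[OF u] by simp
  have L3: "linf n r u = 0 \<Longrightarrow> (cmod (\<Sum>a<m. (vA n A u a)^2))^2 =
        2 * (\<Sum>a<m. (cmod (vA n A u a))^2) * ((\<Sum>a<m. (cmod (vA n A u a))^2) - normsq n u)"
    if u: "\<forall>k\<ge>n. u k = 0" for u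
    using LF(3)[OF u] unfolding vA_def by simp
  note AP0 = algebra_part[OF n2 kp L1 L2 L3]
  have AP: "(\<forall>k<n. r k = 0) \<and> (\<forall>j<n. \<forall>k<n. (\<Sum>a<m. A j a * cnj (A k a)) = (if j = k then 1 else 0))
      \<and> (\<forall>j<n. \<forall>k<n. (\<Sum>a<m. A j a * A k a) = 0)"
    using AP0 by blast
  have r0: "linf n r z = 0" for z using AP unfolding linf_def by simp
  have Fz: "F z a = (\<Sum>k<n. A k a * z k)" if "z \<in> unit_ball n" "a < m" for z a
    using Feq that r0 by (simp add: linf_def)
  define V where "V = (\<lambda>i l. if even i then sqrt 2 * Re (A (i div 2) l) else sqrt 2 * Im (A (i div 2) l))"
  have Vo: "\<forall>i<2*n. \<forall>j<2*n. (\<Sum>l<m. V i l * V j l) = (if i = j then 1 else 0)"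
  proof (intro allI impI)
    fix i j assume i: "i < 2*n" and j: "j < 2*n"
    have i2: "i div 2 < n" and j2: "j div 2 < n" using i j by auto
    have G1: "(\<Sum>l<m. A (i div 2) l * cnj (A (j div 2) l)) = (if i div 2 = j div 2 then 1 else 0)"
      using AP i2 j2 by blast
    have G2: "(\<Sum>l<m. A (j div 2) l * cnj (A (i div 2) l)) = (if j div 2 = i div 2 then 1 else 0)"
      using AP i2 j2 by blast
    have S1: "(\<Sum>l<m. A (i div 2) l * A (j div 2) l) = 0" using AP i2 j2 by blast
    have S2: "(\<Sum>l<m. A (j div 2) l * A (i div 2) l) = 0" using AP i2 j2 by blast
    note O1 = ortho_real[OF G1 S1] and O2 = ortho_real[OF G2 S2]
    have ORs: "(\<Sum>l<m. (sqrt 2 * Re (A (i div 2) l)) * (sqrt 2 * Re (A (j div 2) l))) = (if i div 2 = j div 2 then 1 else 0)"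
      "(\<Sum>l<m. (sqrt 2 * Im (A (i div 2) l)) * (sqrt 2 * Im (A (j div 2) l))) = (if i div 2 = j div 2 then 1 else 0)"
      "(\<Sum>l<m. (sqrt 2 * Re (A (i div 2) l)) * (sqrt 2 * Im (A (j div 2) l))) = 0"
      "(\<Sum>l<m. (sqrt 2 * Re (A (j div 2) l)) * (sqrt 2 * Im (A (i div 2) l))) = 0"
      using O1 O2(3) by simp_all
    have ei: "i = 2 * (i div 2) + (if even i then 0 else 1)"
      by (cases "even i") (simp_all add: odd_two_times_div_two_succ)
    have ej: "j = 2 * (j div 2) + (if even j then 0 else 1)"
      by (cases "even j") (simp_all add: odd_two_times_div_two_succ)
    have eqij: "i = j \<longleftrightarrow> (i div 2 = j div 2 \<and> even i = even j)"
    proof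
      assume "i = j" thus "i div 2 = j div 2 \<and> even i = even j" by simp
    next
      assume H: "i div 2 = j div 2 \<and> even i = even j"
      show "i = j" using ei ej H by metis
    qed
    show "(\<Sum>l<m. V i l * V j l) = (if i = j then 1 else 0)"
    proof (cases "even i"; cases "even j")
      assume "even i" "even j" thus ?thesis using ORs(1) eqij by (simp add: V_def)
    next
      assume "even i" "odd j" thus ?thesis using ORs(3) eqij by (simp add: V_def)
    next
      assume "odd i" "even j"
      hence "(\<Sum>l<m. V i l * V j l) = (\<Sum>l<m. (sqrt 2 * Re (A (j div 2) l)) * (sqrt 2 * Im (A (i div 2) l)))"
        by (simp add: V_def mult.commute)
      thus ?thesis using ORs(4) eqij \<open>odd i\<close> \<open>even j\<close> by auto
    next
      assume "odd i" "odd j" thus ?thesis using ORs(2) eqij by (simp add: V_def)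
    qed
  qed
  obtain Q where Q: "orth2 m Q" and QV: "\<forall>i<2*n. \<forall>l<m. Q i l = V i l"
    using extend_orth[OF m2 Vo] by blast
  show ?thesis
  proof (intro exI conjI ballI allI impI)
    show "orthogonal_mat m Q" using Q by (simp add: orth2_def)
    fix z j assume z: "z \<in> unit_ball n" and j: "j < m"
    have "(\<Sum>i<m. model_vec n z i * complex_of_real (Q i j)) = (\<Sum>i<2*n. model_vec n z i * complex_of_real (Q i j))"
      by (rule sum.mono_neutral_right) (use m2 in \<open>auto simp: model_vec_def\<close>)
    also have "\<dots> = (\<Sum>i<2*n. model_vec n z i * complex_of_real (V i j))"
      using QV j by (intro sum.cong refl) auto
    also have "\<dots> = (\<Sum>k<n. model_vec n z (2*k) * complex_of_real (V (2*k) j) + model_vec n z (2*k+1) * complex_of_real (V (2*k+1) j))"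
      by (rule sum_pairs)
    also have "\<dots> = (\<Sum>k<n. A k j * z k)"
    proof (intro sum.cong refl)
      fix k assume k: "k \<in> {..<n}"
      have s2: "complex_of_real (sqrt 2 / 2) * complex_of_real (sqrt 2) = 1"
        by (simp flip: of_real_mult)
      have "model_vec n z (2*k) * complex_of_real (V (2*k) j) + model_vec n z (2*k+1) * complex_of_real (V (2*k+1) j)
          = z k * (complex_of_real (sqrt 2 / 2) * complex_of_real (sqrt 2)) * (complex_of_real (Re (A k j)) + \<i> * complex_of_real (Im (A k j)))"
        using k by (simp add: model_vec_def V_def algebra_simps)
      also have "\<dots> = A k j * z k" unfolding s2 complex_eq[of "A k j", symmetric] by simp
      finally show "model_vec n z (2*k) * complex_of_real (V (2*k) j) + model_vec n z (2*k+1) * complex_of_real (V (2*k+1) j) = A k j * z k" .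
    qed
    also have "\<dots> = F z j" using Fz[OF z j] by simp
    finally show "F z j = (\<Sum>i<m. model_vec n z i * complex_of_real (Q i j))" by simp
  qed
qed

end
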